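(* Consider NSGA-II with binary tournament selection applied to LOTZ of size $n$ (with $n$ sufficiently large), with population size $N$ satisfying $2n+2\le N=O(n)$. Then the expected number of generations until the population contains, for every vector of the Pareto front $\{(j,n-j): j=0,\dots,n\}$, a solution with that objective vector, is $O(n^2)$ (equivalently, $O(n^3)$ expected fitness evaluations).
   Context: All problems are maximization of two objectives over $\{0,1\}^n$. $\bm{x}$ dominates $\bm{y}$ if $f_i(\bm{x})\ge f_i(\bm{y})$ for all $i$ with strict inequality for some $i$; the Pareto front is the set of objective vectors of non-dominated solutions. LOTZ: $\bm f(\bm x)=\big(\sum_{i=1}^n\prod_{j=1}^i x_j,\ \sum_{i=1}^n\prod_{j=i}^n(1-x_j)\big)$ (number of leading ones, number of trailing zeros); its Pareto front is $\{(j,n-j):0\le j\le n\}$. NSGA-II (population size $N$, $N$ even): Initialize $P$ with $N$ independent uniform random strings in $\{0,1\}^n$. Each generation: (1) select $N$ parents independently from $P$ by the tournament selection scheme, using the crowded comparison $\succ_{\mathrm c}$ (defined below) with respect to ranks and crowding distances of the current population; (2) group consecutive selected parents into $N/2$ pairs; for each pair, with probability $0.9$ apply one-point crossover (choose $i\in\{1,\dots,n\}$ uniformly and exchange the first $i$ bits of the two parents), otherwise keep copies; then apply bit-wise mutation to each of the two resulting strings (flip each bit independently with probability $1/n$); the $N$ resulting offspring form $Q$; (3) partition $P\cup Q$ (a multiset) by non-dominated sorting into fronts $F_1,F_2,\dots$, where $F_1$ are the non-dominated members and $F_i$ the non-dominated members of $(P\cup Q)\setminus\bigcup_{j<i}F_j$;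 $\mathrm{rank}(\bm x)=i$ iff $\bm x\in F_i$; (4) the new population consists of $F_1,\dots,F_{i-1}$ for the largest $i$ with $|F_1\cup\dots\cup F_{i-1}|<N$... more precisely, fronts are added while the population plus the next front has size $<N$; for the critical front $F_i$, crowding distances are computed and the $N-|P|$ members of $F_i$ with largest crowding distance are added. Crowding distance of a set $S=\{\bm x^1,\dots,\bm x^l\}$ of same-rank solutions: start with $0$; for each objective $f_m$, sort $S$ ascending by $f_m$ (solutions with identical objective vectors keep their relative order or have it completely reversed), give the first and last sorted solutions distance $\infty$, and add to each interior $S[j]$ the value $\frac{f_m(S[j+1])-f_m(S[j-1])}{f_m(S[l])-f_m(S[1])}$. Crowded comparison: $\bm x\succ_{\mathrm c}\bm y$ iff $\mathrm{rank}(\bm x)<\mathrm{rank}(\bm y)$ or ($\mathrm{rank}(\bm x)=\mathrm{rank}(\bm y)$ and $\mathrm{dist}(\bm x)>\mathrm{dist}(\bm y)$). Binary tournament selection: pick two solutions from $P$ uniformly at random with replacement and return the better one w.r.t. $\succ_{\mathrm c}$, ties broken uniformly at random. *)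

theory Defs
  imports "HOL-Probability.Probability"
begin

definition LO :: "bool list \<Rightarrow> nat" where
  "LO x = length (takeWhile id x)"

definition TZ :: "bool list \<Rightarrow> nat" where
  "TZ x = length (takeWhile Not (rev x))"

definition lotz :: "bool list \<Rightarrow> nat \<times> nat" where
  "lotz x = (LO x, TZ x)"

definition dominates :: "nat \<times> nat \<Rightarrow> nat \<times> nat \<Rightarrow> bool" where
  "dominates u v \<longleftrightarrow> fst u \<ge> fst v \<and> snd u \<ge> snd v \<and> (fst u > fst v \<or> snd u > snd v)"

section \<open>Non-dominated sorting (indices into a list L, 0-based fronts)\<close>

fun remaining :: "(bool list \<Rightarrow> nat \<times> nat) \<Rightarrow> bool list list \<Rightarrow> nat \<Rightarrow> nat set"
and front :: "(bool list \<Rightarrow> nat \<times> nat) \<Rightarrow> bool list list \<Rightarrow> nat \<Rightarrow> nat set" where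
  "remaining f L 0 = {..<length L}"
| "remaining f L (Suc k) = remaining f L k - front f L k"
| "front f L k = {i \<in> remaining f L k. \<not> (\<exists>j\<in>remaining f L k. dominates (f (L!j)) (f (L!i)))}"

definition rank :: "(bool list \<Rightarrow> nat \<times> nat) \<Rightarrow> bool list list \<Rightarrow> nat \<Rightarrow> nat" where
  "rank f L i = (LEAST k. i \<in> front f L k)"

text \<open>Sorting uses the stable sort_key, so nested sorts give lexicographic keys. Ties among solutions with equal objective value are broken by a priority
  function prio (then by index); the same secondary key is used for both objectives,
  so identical objective vectors keep their relative order.\<close>

definition sorted_front ::
  "(bool list \<Rightarrow> nat \<times> nat) \<Rightarrow> (bool list list \<Rightarrow> nat \<Rightarrow> nat) \<Rightarrow> (nat \<times> nat \<Rightarrow> nat)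
    \<Rightarrow> bool list list \<Rightarrow> nat set \<Rightarrow> nat list" where
  "sorted_front f prio g L S = sort_key (\<lambda>j. g (f (L!j))) (sort_key (prio L) (sorted_list_of_set S))"

definition cd_contrib ::
  "(bool list \<Rightarrow> nat \<times> nat) \<Rightarrow> (nat \<times> nat \<Rightarrow> nat) \<Rightarrow> bool list list \<Rightarrow> nat list \<Rightarrow> nat \<Rightarrow> ereal" where
  "cd_contrib f g L xs p =
     (let l = length xs; v = (\<lambda>q. real (g (f (L ! (xs ! q))))) in
      if p = 0 \<or> p = l - 1 then \<infinity>
      else ereal ((v (p + 1) - v (p - 1)) / (v (l - 1) - v 0)))"

definition crowding_dist ::
  "(bool list \<Rightarrow> nat \<times> nat) \<Rightarrow> (bool list list \<Rightarrow> nat \<Rightarrow> nat) \<Rightarrow> bool list list \<Rightarrow> nat \<Rightarrow> ereal" where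
  "crowding_dist f prio L i =
     (let S = front f L (rank f L i) in
      \<Sum>g\<in>{fst, snd}.
        (let xs = sorted_front f prio g L S in
         \<Sum>p<length xs. if xs ! p = i then cd_contrib f g L xs p else 0))"

definition crowded_better ::
  "(bool list \<Rightarrow> nat \<times> nat) \<Rightarrow> (bool list list \<Rightarrow> nat \<Rightarrow> nat) \<Rightarrow> bool list list \<Rightarrow> nat \<Rightarrow> nat \<Rightarrow> bool" where
  "crowded_better f prio L a b \<longleftrightarrow>
     rank f L a < rank f L b \<or> (rank f L a = rank f L b \<and> crowding_dist f prio L a > crowding_dist f prio L b)"

primrec seq_pmf :: "'a pmf list \<Rightarrow> 'a list pmf" where
  "seq_pmf [] = return_pmf []"
| "seq_pmf (p # ps) = bind_pmf p (\<lambda>x. bind_pmf (seq_pmf ps) (\<lambda>xs. return_pmf (x # xs)))"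

definition uniform_string :: "nat \<Rightarrow> bool list pmf" where
  "uniform_string n = seq_pmf (replicate n (bernoulli_pmf (1/2)))"

definition init_pop :: "nat \<Rightarrow> nat \<Rightarrow> bool list list pmf" where
  "init_pop n N = seq_pmf (replicate N (uniform_string n))"

definition mutate :: "nat \<Rightarrow> bool list \<Rightarrow> bool list pmf" where
  "mutate n x = seq_pmf (map (\<lambda>b. map_pmf (\<lambda>c. if c then \<not> b else b) (bernoulli_pmf (1 / real n))) x)"

definition crossover :: "nat \<Rightarrow> bool list \<Rightarrow> bool list \<Rightarrow> (bool list \<times> bool list) pmf" where
  "crossover n x y =
     bind_pmf (bernoulli_pmf (9/10)) (\<lambda>c.
       if c then map_pmf (\<lambda>i. (take i y @ drop i x, take i x @ drop i y)) (pmf_of_set {1..n})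
       else return_pmf (x, y))"

fun variation :: "nat \<Rightarrow> bool list list \<Rightarrow> bool list list pmf" where
  "variation n (x # y # rest) =
     bind_pmf (crossover n x y) (\<lambda>(c1, c2).
     bind_pmf (mutate n c1) (\<lambda>m1.
     bind_pmf (mutate n c2) (\<lambda>m2.
     bind_pmf (variation n rest) (\<lambda>r. return_pmf (m1 # m2 # r)))))"
| "variation n _ = return_pmf []"

definition tournament ::
  "(bool list \<Rightarrow> nat \<times> nat) \<Rightarrow> (bool list list \<Rightarrow> nat \<Rightarrow> nat) \<Rightarrow> bool list list \<Rightarrow> bool list pmf" where
  "tournament f prio P =
     bind_pmf (pmf_of_set {..<length P}) (\<lambda>a.
     bind_pmf (pmf_of_set {..<length P}) (\<lambda>b.
       map_pmf (\<lambda>i. P ! i)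
         (if crowded_better f prio P a b then return_pmf a
          else if crowded_better f prio P b a then return_pmf b
          else pmf_of_set {a, b})))"

text \<open>Survival selection: the N members of R = P @ Q that come first w.r.t.
  (rank, larger crowding distance, priority, index).  This takes whole fronts while they fit
  and the members of the critical front with largest crowding distance.\<close>

definition survival ::
  "(bool list \<Rightarrow> nat \<times> nat) \<Rightarrow> (bool list list \<Rightarrow> nat \<Rightarrow> nat) \<Rightarrow> nat \<Rightarrow> bool list list \<Rightarrow> bool list list" where
  "survival f prio N R =
     (let K = set (take N (sort_key (rank f R)
                                    (sort_key (\<lambda>i. - crowding_dist f prio R i)
                                      (sort_key (prio R) [0..<length R]))))
      in map (\<lambda>i. R ! i) (filter (\<lambda>i. i \<in> K) [0..<length R]))"

definition nsga2_step ::
  "nat \<Rightarrow> nat \<Rightarrow> (bool list list \<Rightarrow> nat \<Rightarrow> nat) \<Rightarrow> bool list list \<Rightarrow> bool list list pmf" where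
  "nsga2_step n N prio P =
     bind_pmf (seq_pmf (replicate N (tournament lotz prio P))) (\<lambda>S.
     map_pmf (\<lambda>Q. survival lotz prio N (P @ Q)) (variation n S))"

definition covers_front :: "nat \<Rightarrow> bool list list \<Rightarrow> bool" where
  "covers_front n P \<longleftrightarrow> (\<forall>j\<le>n. \<exists>x\<in>set P. lotz x = (j, n - j))"

text \<open>Joint distribution of the population P_t and the flag "some P_s, s \<le> t, covers the front".\<close>

primrec nsga2_hist ::
  "nat \<Rightarrow> nat \<Rightarrow> (bool list list \<Rightarrow> nat \<Rightarrow> nat) \<Rightarrow> nat \<Rightarrow> (bool list list \<times> bool) pmf" where
  "nsga2_hist n N prio 0 = map_pmf (\<lambda>P. (P, covers_front n P)) (init_pop n N)"
| "nsga2_hist n N prio (Suc t) =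
     bind_pmf (nsga2_hist n N prio t) (\<lambda>(P, h).
       map_pmf (\<lambda>P'. (P', h \<or> covers_front n P')) (nsga2_step n N prio P))"

text \<open>T = min{t. covers_front n P_t}; E[T] = sum over t of Pr[T > t].\<close>

definition expected_generations ::
  "nat \<Rightarrow> nat \<Rightarrow> (bool list list \<Rightarrow> nat \<Rightarrow> nat) \<Rightarrow> ennreal" where
  "expected_generations n N prio =
     (\<Sum>t. ennreal (measure_pmf.prob (nsga2_hist n N prio t) {s. \<not> snd s}))"

end

theory Submission
  imports Defs
begin
lemma LO_le: "LO x \<le> length x"
  unfolding LO_def by (metis length_takeWhile_le)

lemma TZ_le: "TZ x \<le> length x"
  unfolding TZ_def by (metis length_rev length_takeWhile_le)

lemma LO_nth: "k < LO x \<Longrightarrow> x ! k"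
proof -
  assume k: "k < LO x"
  hence "takeWhile id x ! k \<in> set (takeWhile id x)" by (simp add: LO_def)
  hence "id (takeWhile id x ! k)" by (rule set_takeWhileD[THEN conjunct2])
  moreover have "takeWhile id x ! k = x ! k" using k by (simp add: LO_def takeWhile_nth)
  ultimately show ?thesis by simp
qed

lemma TZ_nth: "k < TZ x \<Longrightarrow> \<not> x ! (length x - Suc k)"
proof -
  assume k: "k < TZ x"
  hence kl: "k < length (rev x)" using TZ_le[of x] by simp
  have "takeWhile Not (rev x) ! k \<in> set (takeWhile Not (rev x))" using k by (simp add: TZ_def)
  hence "Not (takeWhile Not (rev x) ! k)" by (rule set_takeWhileD[THEN conjunct2])
  moreover have "takeWhile Not (rev x) ! k = rev x ! k" using k by (simp add: TZ_def takeWhile_nth)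
  ultimately show ?thesis using kl by (simp add: rev_nth)
qed

lemma LO_ge: "k \<le> length x \<Longrightarrow> (\<forall>i<k. x ! i) \<Longrightarrow> k \<le> LO x"
proof (rule ccontr)
  assume a: "k \<le> length x" "\<forall>i<k. x ! i" "\<not> k \<le> LO x"
  hence l: "LO x < length x" by simp
  hence "\<not> x ! (LO x)" unfolding LO_def using nth_length_takeWhile[of id x] by simp
  with a show False by simp
qed

lemma TZ_ge: "k \<le> length x \<Longrightarrow> (\<forall>i<k. \<not> x ! (length x - Suc i)) \<Longrightarrow> k \<le> TZ x"
proof (rule ccontr)
  assume a: "k \<le> length x" "\<forall>i<k. \<not> x ! (length x - Suc i)" "\<not> k \<le> TZ x"
  hence l: "TZ x < length (rev x)" by simp
  hence "\<not> \<not> (rev x) ! (TZ x)" unfolding TZ_def using nth_length_takeWhile[of Not "rev x"] by simp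
  hence "x ! (length x - Suc (TZ x))" using l by (simp add: rev_nth)
  with a show False by simp
qed

lemma LO_TZ_le: "LO x + TZ x \<le> length x"
proof (rule ccontr)
  assume "\<not> LO x + TZ x \<le> length x"
  hence tz: "TZ x > 0" using LO_le[of x] by auto
  hence lt: "length x - Suc (TZ x - 1) < LO x" "TZ x - 1 < TZ x" using \<open>\<not> LO x + TZ x \<le> length x\<close> TZ_le[of x] by auto
  from LO_nth[OF lt(1)] TZ_nth[OF lt(2)] show False by simp
qed

lemma lotz_le: "fst (lotz x) + snd (lotz x) \<le> length x"
  using LO_TZ_le by (simp add: lotz_def)

lemma pareto_not_dominated:
  assumes "length y = n" "j \<le> n"
  shows "\<not> dominates (lotz y) (j, n - j)"
  using lotz_le[of y] assms unfolding dominates_def by auto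

lemma pareto_shape:
  assumes "length x = n" "lotz x = (j, n - j)" "j \<le> n"
  shows "x = replicate j True @ replicate (n - j) False"
proof (rule nth_equalityI)
  show "length x = length (replicate j True @ replicate (n - j) False)" using assms by simp
  fix i assume i: "i < length x"
  have lo: "LO x = j" and tz: "TZ x = n - j" using assms(2) by (auto simp: lotz_def)
  show "x ! i = (replicate j True @ replicate (n - j) False) ! i"
  proof (cases "i < j")
    case True
    then show ?thesis using LO_nth[of i x] lo by (simp add: nth_append)
  next
    case False
    have "n - Suc i < TZ x" using False i assms tz by auto
    from TZ_nth[OF this] have "\<not> x ! (length x - Suc (n - Suc i))" .
    moreover have "length x - Suc (n - Suc i) = i" using i assms by auto
    ultimately show ?thesis using False i assms by (simp add: nth_append)
  qed
qed

lemma lotz_block: "lotz (replicate a True @ replicate b False) = (a, b)"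
  by (cases b) (simp_all add: LO_def TZ_def lotz_def takeWhile_append)

lemma LO_upd: "LO x < length x \<Longrightarrow> Suc (LO x) \<le> LO (x[LO x := True])"
  by (rule LO_ge) (auto simp: nth_list_update LO_nth less_Suc_eq)

lemma pareto_flip:
  assumes "1 \<le> j" "j \<le> n"
  shows "(replicate j True @ replicate (n - j) False)[j - 1 := False]
           = replicate (j - 1) True @ replicate (n - (j - 1)) False"
  using assms
  by (intro nth_equalityI) (auto simp: nth_list_update nth_append)

lemma sorted_split:
  fixes h :: "'a \<Rightarrow> 'b::linorder"
  shows "sorted (map h xs) \<Longrightarrow>
    xs = filter (\<lambda>y. h y < c) xs @ filter (\<lambda>y. h y = c) xs @ filter (\<lambda>y. c < h y) xs"
proof (induction xs)
  case Nil
  then show ?case by simp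
next
  case (Cons x xs)
  hence ih: "xs = filter (\<lambda>y. h y < c) xs @ filter (\<lambda>y. h y = c) xs @ filter (\<lambda>y. c < h y) xs"
    and ge: "\<forall>y\<in>set xs. h x \<le> h y" by auto
  consider "h x < c" | "h x = c" | "c < h x" by fastforce
  then show ?case
  proof cases
    case 1
    hence "h x \<noteq> c" "\<not> c < h x" by auto
    then show ?thesis using 1 ih by simp
  next
    case 2
    hence "filter (\<lambda>y. h y < c) xs = []" using ge by (force simp: filter_empty_conv)
    then show ?thesis using 2 ih by simp
  next
    case 3
    hence "filter (\<lambda>y. h y < c) xs = []" "filter (\<lambda>y. h y = c) xs = []" using ge
      by (force simp: filter_empty_conv)+
    then show ?thesis using 3 ih by simp
  qed
qed

definition pos :: "'a list \<Rightarrow> 'a \<Rightarrow> nat" where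
  "pos xs b = (THE p. p < length xs \<and> xs ! p = b)"

lemma pos_nth: "distinct xs \<Longrightarrow> p < length xs \<Longrightarrow> pos xs (xs ! p) = p"
  unfolding pos_def by (rule the_equality) (auto simp: nth_eq_iff_index_eq)

lemma pos_in: "distinct xs \<Longrightarrow> b \<in> set xs \<Longrightarrow> pos xs b < length xs \<and> xs ! pos xs b = b"
  by (metis in_set_conv_nth pos_nth)

lemma pos_split: "distinct (pre @ blk @ post) \<Longrightarrow> r < length blk \<Longrightarrow>
   pos (pre @ blk @ post) (blk ! r) = length pre + r"
proof -
  assume d: "distinct (pre @ blk @ post)" and r: "r < length blk"
  have "(pre @ blk @ post) ! (length pre + r) = blk ! r" using r by (simp add: nth_append)
  moreover have "length pre + r < length (pre @ blk @ post)" using r by simp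
  ultimately show ?thesis using pos_nth[OF d] by metis
qed

lemma sum_over_nth_eq:
  assumes "distinct xs" "p < length xs"
  shows "(\<Sum>q<length xs. if xs ! q = xs ! p then (c q :: 'b::comm_monoid_add) else 0) = c p"
proof -
  have "(\<Sum>q<length xs. if xs ! q = xs ! p then c q else 0) = (\<Sum>q<length xs. if q = p then c q else 0)"
    using assms by (intro sum.cong) (auto simp: nth_eq_iff_index_eq)
  also have "\<dots> = c p" using assms by simp
  finally show ?thesis .
qed

lemma sum_over_nth_notin:
  assumes "b \<notin> set xs"
  shows "(\<Sum>q<length xs. if xs ! q = b then (c q :: 'b::comm_monoid_add) else 0) = 0"
  using assms by (intro sum.neutral) auto

lemma sorted_before:
  fixes h :: "'a \<Rightarrow> 'b::linorder"
  assumes "sorted (map h ys)" "p < length ys" "q \<le> p"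
  shows "h (ys ! q) \<le> h (ys ! p)"
  using assms by (simp add: sorted_iff_nth_mono)

lemma telescope2:
  fixes k :: "nat \<Rightarrow> real"
  assumes mono: "\<And>a b. a \<le> b \<Longrightarrow> b < l \<Longrightarrow> k a \<le> k b" and l: "2 \<le> l"
  shows "(\<Sum>p\<in>{1..<l-1}. k (p+1) - k (p-1)) \<le> 2 * (k (l-1) - k 0)"
proof -
  have a: "(\<Sum>p\<in>{1..<l-1}. k (p+1) - k p) = k (l-1) - k 1"
    using sum_Suc_diff'[of 1 "l-1" k] l by (simp add: Suc_leI)
  have b: "(\<Sum>p\<in>{1..<l-1}. k p - k (p-1)) = k (l-2) - k 0"
  proof -
    have "(\<Sum>p\<in>{1..<l-1}. k p - k (p-1)) = (\<Sum>p\<in>{0..<l-2}. k (Suc p) - k p)"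
      by (rule sum.reindex_bij_witness[of _ Suc "\<lambda>p. p - 1"]) auto
    also have "\<dots> = k (l-2) - k 0" using sum_Suc_diff'[of 0 "l-2" k] by simp
    finally show ?thesis .
  qed
  have "(\<Sum>p\<in>{1..<l-1}. k (p+1) - k (p-1)) =
        (\<Sum>p\<in>{1..<l-1}. k (p+1) - k p) + (\<Sum>p\<in>{1..<l-1}. k p - k (p-1))"
    by (simp add: sum.distrib[symmetric])
  also have "\<dots> = (k (l-1) - k 1) + (k (l-2) - k 0)" using a b by simp
  also have "\<dots> \<le> 2 * (k (l-1) - k 0)"
  proof -
    have "k 0 \<le> k 1" by (rule mono) (use l in auto)
    moreover have "k (l-2) \<le> k (l-1)" by (rule mono) (use l in auto)
    ultimately show ?thesis by simp
  qed
  finally show ?thesis .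
qed

definition BL :: "(bool list \<Rightarrow> nat \<times> nat) \<Rightarrow> (bool list list \<Rightarrow> nat \<Rightarrow> nat) \<Rightarrow> bool list list \<Rightarrow> nat list" where
  "BL f prio L = sort_key (prio L) (sorted_list_of_set (front f L 0))"

definition blk :: "(bool list \<Rightarrow> nat \<times> nat) \<Rightarrow> (bool list list \<Rightarrow> nat \<Rightarrow> nat) \<Rightarrow> bool list list \<Rightarrow> nat \<times> nat \<Rightarrow> nat list" where
  "blk f prio L w = filter (\<lambda>y. f (L!y) = w) (BL f prio L)"

definition SF :: "(bool list \<Rightarrow> nat \<times> nat) \<Rightarrow> (bool list list \<Rightarrow> nat \<Rightarrow> nat) \<Rightarrow> (nat \<times> nat \<Rightarrow> nat) \<Rightarrow> bool list list \<Rightarrow> nat list" where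
  "SF f prio g L = sorted_front f prio g L (front f L 0)"

lemma front0: "front f L 0 = {i. i < length L \<and> \<not> (\<exists>j<length L. dominates (f (L!j)) (f (L!i)))}"
  by auto

lemma finite_front0: "finite (front f L 0)" and front0_sub: "front f L 0 \<subseteq> {..<length L}"
  by (auto simp: front0)

lemma front0_nd: "i \<in> front f L 0 \<Longrightarrow> k \<in> front f L 0 \<Longrightarrow> \<not> dominates (f (L!k)) (f (L!i))"
  by (auto simp: front0)

lemma rank0: "i \<in> front f L 0 \<Longrightarrow> rank f L i = 0"
  unfolding rank_def by (rule Least_eq_0)

lemma nd_eq:
  assumes "i \<in> front f L 0" "k \<in> front f L 0" "g = fst \<or> g = snd"
  shows "g (f (L!k)) = g (f (L!i)) \<longleftrightarrow> f (L!k) = f (L!i)"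
  using front0_nd[OF assms(1,2)] front0_nd[OF assms(2,1)] assms(3)
  by (cases "f (L!k)"; cases "f (L!i)") (auto simp: dominates_def)

lemma nd_lt:
  assumes "i \<in> front f L 0" "k \<in> front f L 0" "fst (f (L!k)) < fst (f (L!i))"
  shows "snd (f (L!i)) < snd (f (L!k))"
  using front0_nd[OF assms(2,1)] assms(3)
  by (cases "f (L!k)"; cases "f (L!i)") (auto simp: dominates_def)

lemma BL_set: "set (BL f prio L) = front f L 0" and BL_distinct: "distinct (BL f prio L)"
  using finite_front0 by (auto simp: BL_def)

lemma SF_set: "set (SF f prio g L) = front f L 0"
  and SF_distinct: "distinct (SF f prio g L)"
  and SF_sorted: "sorted (map (\<lambda>j. g (f (L!j))) (SF f prio g L))"
  using finite_front0 by (auto simp: SF_def sorted_front_def)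

lemma SF_length: "length (SF f prio g L) = card (front f L 0)"
  using distinct_card[OF SF_distinct, of f prio g L] SF_set by simp

lemma blk_set: "set (blk f prio L w) = {y \<in> front f L 0. f (L!y) = w}"
  and blk_distinct: "distinct (blk f prio L w)"
  using BL_set BL_distinct by (auto simp: blk_def)

lemma SF_filter:
  assumes "i \<in> front f L 0" "g = fst \<or> g = snd"
  shows "filter (\<lambda>y. g (f (L!y)) = g (f (L!i))) (SF f prio g L) = blk f prio L (f (L!i))"
proof -
  have "filter (\<lambda>y. g (f (L!y)) = g (f (L!i))) (SF f prio g L)
      = filter (\<lambda>y. g (f (L!y)) = g (f (L!i))) (BL f prio L)"
    unfolding SF_def sorted_front_def BL_def by (rule sort_key_stable)
  also have "\<dots> = blk f prio L (f (L!i))"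
    unfolding blk_def using BL_set nd_eq[OF assms(1) _ assms(2)]
    by (intro filter_cong) auto
  finally show ?thesis .
qed

lemma SF_split:
  assumes "i \<in> front f L 0" "g = fst \<or> g = snd"
  shows "SF f prio g L = filter (\<lambda>y. g (f (L!y)) < g (f (L!i))) (SF f prio g L) @ blk f prio L (f (L!i))
            @ filter (\<lambda>y. g (f (L!i)) < g (f (L!y))) (SF f prio g L)"
  using sorted_split[OF SF_sorted[where g=g and f=f and prio=prio and L=L], where c="g (f (L!i))"] SF_filter[OF assms] by simp

lemma fst_neq_snd: "(fst :: nat \<times> nat \<Rightarrow> nat) \<noteq> snd"
  by (metis fst_conv snd_conv zero_neq_one)

lemma cd_front0:
  assumes "i \<in> front f L 0"
  shows "crowding_dist f prio L i =
    cd_contrib f fst L (SF f prio fst L) (pos (SF f prio fst L) i) +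
    cd_contrib f snd L (SF f prio snd L) (pos (SF f prio snd L) i)"
proof -
  have inner: "(\<Sum>p<length (SF f prio g L). if SF f prio g L ! p = i then cd_contrib f g L (SF f prio g L) p else 0)
      = cd_contrib f g L (SF f prio g L) (pos (SF f prio g L) i)" for g
  proof -
    have pi: "pos (SF f prio g L) i < length (SF f prio g L) \<and> SF f prio g L ! pos (SF f prio g L) i = i"
      using pos_in[OF SF_distinct] SF_set assms by metis
    show ?thesis using sum_over_nth_eq[OF SF_distinct pi[THEN conjunct1], of "cd_contrib f g L (SF f prio g L)"] pi
      by simp
  qed
  show ?thesis
    unfolding crowding_dist_def rank0[OF assms] Let_def SF_def[symmetric]
    using fst_neq_snd by (simp add: inner del: front.simps remaining.simps)
qed

lemma cd_not_front0:
  assumes "i \<notin> front f L 0" "rank f L i = 0"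
  shows "crowding_dist f prio L i = 0"
proof -
  have "i \<notin> set (sorted_front f prio g L (front f L 0))" for g
    using SF_set[of f prio g L] assms(1) by (simp add: SF_def)
  thus ?thesis unfolding crowding_dist_def assms(2) Let_def
    by (simp add: sum_over_nth_notin del: front.simps remaining.simps)
qed

definition ctrR :: "(nat \<Rightarrow> nat) \<Rightarrow> nat list \<Rightarrow> nat \<Rightarrow> real" where
  "ctrR \<kappa> xs p = (real (\<kappa> (xs!(p+1))) - real (\<kappa> (xs!(p-1)))) /
                    (real (\<kappa> (xs!(length xs - 1))) - real (\<kappa> (xs!0)))"

definition contribK :: "(nat \<Rightarrow> nat) \<Rightarrow> nat list \<Rightarrow> nat \<Rightarrow> ereal" where
  "contribK \<kappa> xs p = (if p = 0 \<or> p = length xs - 1 then \<infinity> else ereal (ctrR \<kappa> xs p))"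

lemma cd_contrib_K: "cd_contrib f g L xs p = contribK (\<lambda>y. g (f (L!y))) xs p"
  by (simp add: cd_contrib_def contribK_def ctrR_def Let_def)

lemma sorted_mono_nth:
  assumes "sorted (map \<kappa> xs)" "a \<le> b" "b < length xs"
  shows "real (\<kappa> (xs!a)) \<le> real (\<kappa> (xs!b))"
  using assms by (simp add: sorted_iff_nth_mono)

lemma ctrR_nonneg:
  assumes "sorted (map \<kappa> xs)" "0 < p" "p < length xs - 1"
  shows "0 \<le> ctrR \<kappa> xs p"
proof -
  have "real (\<kappa> (xs!(p-1))) \<le> real (\<kappa> (xs!(p+1)))" by (rule sorted_mono_nth[OF assms(1)]) (use assms in auto)
  moreover have "real (\<kappa> (xs!0)) \<le> real (\<kappa> (xs!(length xs - 1)))" by (rule sorted_mono_nth[OF assms(1)]) (use assms in auto)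
  ultimately show ?thesis unfolding ctrR_def by (simp add: divide_nonneg_nonneg)
qed

lemma contribK_nonneg:
  assumes "sorted (map \<kappa> xs)" "p < length xs"
  shows "0 \<le> contribK \<kappa> xs p"
  using ctrR_nonneg[OF assms(1), of p] assms unfolding contribK_def by auto

lemma contribK_zero:
  assumes "xs = pre @ bl @ post" "\<forall>y\<in>set bl. \<kappa> y = c" "0 < r" "Suc r < length bl"
  shows "contribK \<kappa> xs (length pre + r) = 0"
proof -
  have a: "xs ! (length pre + r + 1) = bl ! (Suc r)" "xs ! (length pre + r - 1) = bl ! (r - 1)"
    using assms by (auto simp: nth_append)
  have "bl ! Suc r \<in> set bl" "bl ! (r - 1) \<in> set bl" using assms by auto
  hence "\<kappa> (xs ! (length pre + r + 1)) = \<kappa> (xs ! (length pre + r - 1))" using a assms(2) by simp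
  moreover have "length pre + r \<noteq> 0" "length pre + r \<noteq> length xs - 1" using assms by auto
  ultimately show ?thesis unfolding contribK_def ctrR_def by simp
qed

lemma contribK_first:
  assumes s: "sorted (map \<kappa> xs)" and xs: "xs = pre @ bl @ post" and bl: "bl \<noteq> []"
    and pre: "\<forall>y\<in>set pre. \<kappa> y + d \<le> \<kappa> (hd bl)" and d: "1 \<le> d"
    and M: "\<forall>y\<in>set xs. \<kappa> y \<le> M"
  shows "ereal (real d / real M) \<le> contribK \<kappa> xs (length pre)"
proof (cases "length pre = 0 \<or> length pre = length xs - 1")
  case True
  then show ?thesis by (simp add: contribK_def)
next
  case False
  let ?p = "length pre"
  let ?k = "\<lambda>q. real (\<kappa> (xs!q))"
  have lb: "length bl > 0" using bl by simp
  have lx: "length xs = ?p + length bl + length post" using xs by simp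
  have f1: "?p \<noteq> length xs - 1" "?p \<noteq> 0" using False by auto
  have pl: "?p < length xs" using lx lb by simp
  have l: "?p + 1 < length xs" "0 < ?p" using f1 pl by linarith+
  have xp: "xs ! ?p = hd bl" using xs bl by (simp add: nth_append hd_conv_nth)
  have "xs ! (?p - 1) \<in> set pre" using xs l by (simp add: nth_append)
  hence a: "?k (?p - 1) + d \<le> ?k ?p" using pre xp by (metis of_nat_add of_nat_le_iff)
  have b: "?k ?p \<le> ?k (?p + 1)" by (rule sorted_mono_nth[OF s]) (use l in auto)
  have c0: "?k 0 \<le> ?k (?p - 1)" by (rule sorted_mono_nth[OF s]) (use l in auto)
  have c1: "?k (?p + 1) \<le> ?k (length xs - 1)" by (rule sorted_mono_nth[OF s]) (use l in auto)
  have "xs ! (length xs - 1) \<in> set xs" using l by simp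
  hence Mb: "?k (length xs - 1) \<le> M" using M by simp
  have D: "0 < ?k (length xs - 1) - ?k 0" "?k (length xs - 1) - ?k 0 \<le> M" using a b c0 c1 d Mb by auto
  have num: "real d \<le> ?k (?p + 1) - ?k (?p - 1)" using a b by simp
  have "real d / M \<le> real d / (?k (length xs - 1) - ?k 0)"
    using D d by (intro divide_left_mono) auto
  also have "\<dots> \<le> (?k (?p + 1) - ?k (?p - 1)) / (?k (length xs - 1) - ?k 0)"
    using D num by (intro divide_right_mono) auto
  finally show ?thesis using False unfolding contribK_def ctrR_def by simp
qed

lemma sum_ctrR_le:
  assumes s: "sorted (map \<kappa> xs)"
  shows "(\<Sum>p\<in>{1..<length xs - 1}. ctrR \<kappa> xs p) \<le> 2"
proof (cases "2 \<le> length xs")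
  case False
  hence "{1..<length xs - 1} = {}" by auto
  then show ?thesis by simp
next
  case True
  let ?k = "\<lambda>q. real (\<kappa> (xs!q))"
  let ?D = "?k (length xs - 1) - ?k 0"
  have mono: "\<And>a b. a \<le> b \<Longrightarrow> b < length xs \<Longrightarrow> ?k a \<le> ?k b" by (rule sorted_mono_nth[OF s])
  have D0: "0 \<le> ?D" using mono[of 0 "length xs - 1"] True by simp
  have "(\<Sum>p\<in>{1..<length xs - 1}. ctrR \<kappa> xs p) = (\<Sum>p\<in>{1..<length xs - 1}. ?k (p+1) - ?k (p-1)) / ?D"
    unfolding ctrR_def by (simp add: sum_divide_distrib)
  also have "\<dots> \<le> 2"
  proof (cases "?D = 0")
    case True
    then show ?thesis by simp
  next
    case False
    hence "0 < ?D" using D0 by simp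
    thus ?thesis using telescope2[of "length xs" ?k, OF mono True] by (simp add: divide_le_eq)
  qed
  finally show ?thesis .
qed

lemma blk_nonempty:
  assumes "i \<in> front f L 0"
  shows "blk f prio L (f (L!i)) \<noteq> []" "i \<in> set (blk f prio L (f (L!i)))"
  using assms blk_set[of f prio L "f (L!i)"] by auto

lemma hd_blk:
  fixes f :: "bool list \<Rightarrow> nat \<times> nat" and prio :: "bool list list \<Rightarrow> nat \<Rightarrow> nat" and L i
  assumes "i \<in> front f L 0"
  defines "h \<equiv> hd (blk f prio L (f (L!i)))"
  shows "h \<in> front f L 0" "f (L!h) = f (L!i)" "hd (blk f prio L (f (L!h))) = h"
proof -
  have "h \<in> set (blk f prio L (f (L!i)))" using blk_nonempty[OF assms(1)] unfolding h_def by simp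
  thus "h \<in> front f L 0" "f (L!h) = f (L!i)" using blk_set by auto
  thus "hd (blk f prio L (f (L!h))) = h" unfolding h_def by simp
qed

lemma pos_SF:
  assumes "i \<in> front f L 0" "g = fst \<or> g = snd" "r < length (blk f prio L (f (L!i)))"
    "blk f prio L (f (L!i)) ! r = i"
  shows "pos (SF f prio g L) i = length (filter (\<lambda>y. g (f (L!y)) < g (f (L!i))) (SF f prio g L)) + r"
  using pos_split[of "filter (\<lambda>y. g (f (L!y)) < g (f (L!i))) (SF f prio g L)" "blk f prio L (f (L!i))"
      "filter (\<lambda>y. g (f (L!i)) < g (f (L!y))) (SF f prio g L)" r]
    SF_split[OF assms(1,2), of prio] SF_distinct[of f prio g L] assms(3,4)
  by simp

lemma contrib_first_front:
  assumes i: "i \<in> front f L 0" and g: "g = fst \<or> g = snd"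
    and hd: "hd (blk f prio L (f (L!i))) = i"
    and d: "1 \<le> d" and gap: "\<forall>y\<in>front f L 0. g (f (L!y)) < g (f (L!i)) \<longrightarrow> g (f (L!y)) + d \<le> g (f (L!i))"
    and M: "\<forall>y\<in>front f L 0. g (f (L!y)) \<le> M"
  shows "ereal (real d / real M) \<le> cd_contrib f g L (SF f prio g L) (pos (SF f prio g L) i)"
proof -
  let ?bl = "blk f prio L (f (L!i))"
  let ?pre = "filter (\<lambda>y. g (f (L!y)) < g (f (L!i))) (SF f prio g L)"
  let ?post = "filter (\<lambda>y. g (f (L!i)) < g (f (L!y))) (SF f prio g L)"
  have ne: "?bl \<noteq> []" using blk_nonempty[OF i] by simp
  have r0: "?bl ! 0 = i" using hd ne by (simp add: hd_conv_nth)
  have p: "pos (SF f prio g L) i = length ?pre"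
    using pos_SF[OF i g, of 0 prio] r0 ne by simp
  have "ereal (real d / real M) \<le> contribK (\<lambda>y. g (f (L!y))) (SF f prio g L) (length ?pre)"
  proof (rule contribK_first[OF SF_sorted SF_split[OF i g] ne _ d])
    show "\<forall>y\<in>set ?pre. g (f (L ! y)) + d \<le> g (f (L ! hd ?bl))"
      using gap SF_set hd by auto
    show "\<forall>y\<in>set (SF f prio g L). g (f (L ! y)) \<le> M" using M SF_set by auto
  qed
  thus ?thesis using p by (simp add: cd_contrib_K)
qed

lemma contrib_nonneg_front:
  assumes "i \<in> front f L 0"
  shows "0 \<le> cd_contrib f g L (SF f prio g L) (pos (SF f prio g L) i)"
proof -
  have "pos (SF f prio g L) i < length (SF f prio g L)" using pos_in[OF SF_distinct] SF_set assms by metis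
  thus ?thesis using contribK_nonneg[OF SF_sorted] by (simp add: cd_contrib_K)
qed

lemma cd_hd_bound:
  assumes i: "i \<in> front f L 0" and hd: "hd (blk f prio L (f (L!i))) = i"
    and d1: "1 \<le> d1" and gap1: "\<forall>y\<in>front f L 0. fst (f (L!y)) < fst (f (L!i)) \<longrightarrow> fst (f (L!y)) + d1 \<le> fst (f (L!i))"
    and d2: "1 \<le> d2" and gap2: "\<forall>y\<in>front f L 0. snd (f (L!y)) < snd (f (L!i)) \<longrightarrow> snd (f (L!y)) + d2 \<le> snd (f (L!i))"
    and M: "\<forall>y\<in>front f L 0. fst (f (L!y)) \<le> M \<and> snd (f (L!y)) \<le> M"
  shows "ereal (real d1 / real M) + ereal (real d2 / real M) \<le> crowding_dist f prio L i"
  unfolding cd_front0[OF i]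
  by (rule add_mono; rule contrib_first_front[OF i _ hd]) (use d1 d2 gap1 gap2 M in auto)

lemma gap1: "\<forall>y\<in>front f L 0. (g :: nat \<times> nat \<Rightarrow> nat) (f (L!y)) < g (f (L!i)) \<longrightarrow> g (f (L!y)) + 1 \<le> g (f (L!i))"
  by auto

lemma cd_hd_pos:
  assumes i: "i \<in> front f L 0" and hd: "hd (blk f prio L (f (L!i))) = i"
    and M: "\<forall>y\<in>front f L 0. fst (f (L!y)) \<le> M \<and> snd (f (L!y)) \<le> M" and M0: "0 < M"
  shows "0 < crowding_dist f prio L i"
proof -
  have "ereal (real 1 / real M) + ereal (real 1 / real M) \<le> crowding_dist f prio L i"
    by (rule cd_hd_bound[OF i hd _ gap1 _ gap1 M]) auto
  moreover have "0 < ereal (real 1 / real M) + ereal (real 1 / real M)" using M0 by simp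
  ultimately show ?thesis by order
qed

lemma cd_interior:
  assumes i: "i \<in> front f L 0" and r: "0 < r" "Suc r < length (blk f prio L (f (L!i)))"
    "blk f prio L (f (L!i)) ! r = i"
  shows "crowding_dist f prio L i = 0"
proof -
  have z: "cd_contrib f g L (SF f prio g L) (pos (SF f prio g L) i) = 0" if g: "g = fst \<or> g = snd" for g
  proof -
    have "pos (SF f prio g L) i = length (filter (\<lambda>y. g (f (L!y)) < g (f (L!i))) (SF f prio g L)) + r"
      using pos_SF[OF i g, of r prio] r by simp
    moreover have "\<forall>y\<in>set (blk f prio L (f (L!i))). g (f (L!y)) = g (f (L!i))" using blk_set by auto
    ultimately show ?thesis
      using contribK_zero[OF SF_split[OF i g] _ r(1,2)] by (simp add: cd_contrib_K)
  qed
  show ?thesis unfolding cd_front0[OF i] using z by simp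
qed

lemma cd_pos_hd_last:
  assumes i: "i \<in> front f L 0" and pos: "0 < crowding_dist f prio L i"
  shows "i = hd (blk f prio L (f (L!i))) \<or> i = last (blk f prio L (f (L!i)))"
proof -
  let ?bl = "blk f prio L (f (L!i))"
  obtain r where r: "r < length ?bl" "?bl ! r = i" using blk_nonempty[OF i] by (metis in_set_conv_nth)
  consider "r = 0" | "Suc r = length ?bl" | "0 < r" "Suc r < length ?bl" using r by linarith
  then show ?thesis
  proof cases
    case 1 then show ?thesis using r by (simp add: hd_conv_nth)
  next
    case 2 then show ?thesis using r by (metis diff_Suc_1 last_conv_nth list.size(3) nat.distinct(1))
  next
    case 3 then show ?thesis using cd_interior[OF i 3 r(2)] pos by simp
  qed
qed

lemma card_pos_cd:
  "card {i \<in> front f L 0. 0 < crowding_dist f prio L i} \<le> 2 * card ((\<lambda>i. f (L!i)) ` front f L 0)"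
proof -
  let ?W = "(\<lambda>i. f (L!i)) ` front f L 0"
  have "{i \<in> front f L 0. 0 < crowding_dist f prio L i}
        \<subseteq> (\<Union>w\<in>?W. {hd (blk f prio L w), last (blk f prio L w)})"
    using cd_pos_hd_last by blast
  hence "card {i \<in> front f L 0. 0 < crowding_dist f prio L i}
        \<le> card (\<Union>w\<in>?W. {hd (blk f prio L w), last (blk f prio L w)})"
    by (intro card_mono) (auto intro: finite_front0)
  also have "\<dots> \<le> (\<Sum>w\<in>?W. card {hd (blk f prio L w), last (blk f prio L w)})"
    by (rule card_UN_le) (auto intro: finite_front0)
  also have "\<dots> \<le> (\<Sum>w\<in>?W. 2)"
    by (intro sum_mono) (simp add: card_insert_le_m1)
  also have "\<dots> = 2 * card ?W" by simp
  finally show ?thesis .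
qed

lemma card_vectors:
  assumes "\<forall>y\<in>front f L 0. fst (f (L!y)) \<le> n"
  shows "card ((\<lambda>i. f (L!i)) ` front f L 0) \<le> n + 1"
proof -
  let ?W = "(\<lambda>i. f (L!i)) ` front f L 0"
  have inj: "inj_on fst ?W" using nd_eq[of _ f L _ fst] by (auto simp: inj_on_def)
  have "card ?W = card (fst ` ?W)" using card_image[OF inj] by simp
  also have "\<dots> \<le> card {0..n}" using assms by (intro card_mono) auto
  finally show ?thesis by simp
qed

lemma cd_last_inf:
  assumes "front f L 0 \<noteq> {}"
  shows "crowding_dist f prio L (last (SF f prio fst L)) = \<infinity>"
    "last (SF f prio fst L) \<in> front f L 0"
proof -
  let ?xs = "SF f prio fst L"
  have ne: "?xs \<noteq> []" using SF_set[of f prio fst L] assms by auto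
  show lf: "last ?xs \<in> front f L 0" using ne SF_set[of f prio fst L] by (metis last_in_set)
  have "pos ?xs (last ?xs) = length ?xs - 1"
    using pos_nth[OF SF_distinct, of "length ?xs - 1"] ne by (simp add: last_conv_nth)
  hence "cd_contrib f fst L ?xs (pos ?xs (last ?xs)) = \<infinity>"
    by (simp add: cd_contrib_K contribK_def)
  moreover have "0 \<le> cd_contrib f snd L (SF f prio snd L) (pos (SF f prio snd L) (last ?xs))"
    by (rule contrib_nonneg_front[OF lf])
  ultimately show "crowding_dist f prio L (last ?xs) = \<infinity>"
    unfolding cd_front0[OF lf] by simp
qed

lemma prefix_in_take:
  assumes d: "distinct ys" and p: "p < length ys" and A: "finite A"
    and pre: "\<forall>q\<le>p. ys ! q \<in> A" and N: "card A \<le> N"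
  shows "ys ! p \<in> set (take N ys)"
proof -
  have "set (take (Suc p) ys) \<subseteq> A" using pre by (auto simp: in_set_conv_nth)
  hence "card (set (take (Suc p) ys)) \<le> card A" using A by (rule card_mono[rotated])
  moreover have "card (set (take (Suc p) ys)) = Suc p" using d p by (simp add: distinct_card)
  ultimately have "p < N" using N by simp
  thus ?thesis using p by (simp add: in_set_conv_nth) (metis length_take min_less_iff_conj nth_take)
qed

lemma sorted_prefix_le:
  fixes h :: "'a \<Rightarrow> 'b::linorder"
  assumes "sorted (map h (us @ a # vs))" "u \<in> set us"
  shows "h u \<le> h a"
  using assms by (simp add: sorted_append)

lemma survival_len_set:
  assumes "N \<le> length R"
  shows "length (survival f prio N R) = N" "set (survival f prio N R) \<subseteq> set R"
proof -
  let ?ys = "sort_key (rank f R) (sort_key (\<lambda>i. - crowding_dist f prio R i) (sort_key (prio R) [0..<length R]))"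
  let ?K = "set (take N ?ys)"
  have ys: "distinct ?ys" "set ?ys = {..<length R}" "length ?ys = length R" by auto
  have K: "?K \<subseteq> {..<length R}" using ys by (metis set_take_subset)
  have cK: "card ?K = N" using ys assms by (simp add: distinct_card)
  have "set (filter (\<lambda>i. i \<in> ?K) [0..<length R]) = ?K" using K by auto
  hence "length (filter (\<lambda>i. i \<in> ?K) [0..<length R]) = N"
    using distinct_card[of "filter (\<lambda>i. i \<in> ?K) [0..<length R]"] cK by simp
  thus "length (survival f prio N R) = N" unfolding survival_def Let_def by simp
  show "set (survival f prio N R) \<subseteq> set R" unfolding survival_def Let_def by auto
qed

lemma survival_keeps:
  assumes NR: "N \<le> length R" and Nn: "2 * (n + 1) \<le> N" and len: "\<forall>x\<in>set R. length x = n"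
    and n0: "0 < n" and i: "i \<in> front lotz R 0"
  shows "\<exists>y\<in>set (survival lotz prio N R). lotz y = lotz (R!i)"
proof -
  define cd where "cd = crowding_dist lotz prio R"
  define rk where "rk = rank lotz R"
  define L1 where "L1 = sort_key (\<lambda>i. - cd i) (sort_key (prio R) [0..<length R])"
  define ys where "ys = sort_key rk L1"
  define A where "A = {k. k < length R \<and> rk k = 0 \<and> 0 < cd k}"
  have surv: "survival lotz prio N R = map (\<lambda>i. R ! i) (filter (\<lambda>i. i \<in> set (take N ys)) [0..<length R])"
    unfolding survival_def Let_def ys_def L1_def cd_def rk_def by (rule refl)
  have S0sub: "front lotz R 0 \<subseteq> {..<length R}" by (rule front0_sub)
  have keys: "\<forall>y\<in>front lotz R 0. fst (lotz (R!y)) \<le> n \<and> snd (lotz (R!y)) \<le> n"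
  proof
    fix y assume "y \<in> front lotz R 0"
    hence "R!y \<in> set R" using S0sub by auto
    thus "fst (lotz (R!y)) \<le> n \<and> snd (lotz (R!y)) \<le> n"
      using len LO_le TZ_le by (auto simp: lotz_def)
  qed
  have Asub: "A \<subseteq> {i \<in> front lotz R 0. 0 < cd i}"
  proof
    fix k assume k: "k \<in> A"
    hence rk0: "rank lotz R k = 0" and pk: "0 < cd k" by (auto simp: A_def rk_def)
    have "k \<in> front lotz R 0"
    proof (rule ccontr)
      assume nk: "k \<notin> front lotz R 0"
      have "crowding_dist lotz prio R k = 0" by (rule cd_not_front0[OF nk rk0])
      thus False using pk by (simp add: cd_def)
    qed
    thus "k \<in> {i \<in> front lotz R 0. 0 < cd i}" using pk by blast
  qed
  have cardA: "card A \<le> N"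
  proof -
    have "card A \<le> card {i \<in> front lotz R 0. 0 < cd i}"
      by (rule card_mono[OF _ Asub]) (simp add: finite_front0)
    also have "\<dots> \<le> 2 * card ((\<lambda>i. lotz (R!i)) ` front lotz R 0)" unfolding cd_def by (rule card_pos_cd)
    also have "\<dots> \<le> 2 * (n + 1)" using card_vectors[of lotz R n] keys by simp
    finally show ?thesis using Nn by simp
  qed
  define h where "h = hd (blk lotz prio R (lotz (R!i)))"
  have h: "h \<in> front lotz R 0" "lotz (R!h) = lotz (R!i)" "hd (blk lotz prio R (lotz (R!h))) = h"
    using hd_blk[OF i, of prio] unfolding h_def by auto
  have hpos: "0 < cd h" unfolding cd_def by (rule cd_hd_pos[OF h(1) h(3) keys n0])
  have hl: "h < length R" using h(1) S0sub by auto
  have hA: "h \<in> A" using hl hpos rank0[OF h(1)] by (simp add: A_def rk_def)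
  have ys: "distinct ys" "set ys = {..<length R}" unfolding ys_def L1_def by auto
  have sr: "sorted (map rk ys)" unfolding ys_def by simp
  have sL1: "sorted (map (\<lambda>i. - cd i) L1)" unfolding L1_def by simp
  have stab: "filter (\<lambda>y. rk y = 0) ys = filter (\<lambda>y. rk y = 0) L1"
    unfolding ys_def by (rule sort_key_stable)
  obtain p where p: "p < length ys" "ys ! p = h" using hl ys by (metis in_set_conv_nth lessThan_iff)
  have rh: "rk h = 0" using hA by (simp add: A_def)
  have "\<forall>q\<le>p. ys ! q \<in> A"
  proof (intro allI impI)
    fix q assume qp: "q \<le> p"
    have rq: "rk (ys ! q) = 0"
      using sorted_before[OF sr p(1) qp] p(2) rh by simp
    have "ys ! q \<in> set ys" using qp p(1) by simp
    hence ql: "ys ! q < length R" using ys by simp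
    show "ys ! q \<in> A"
    proof (cases "q = p")
      case True then show ?thesis using p hA by simp
    next
      case False
      hence qp': "q < p" using qp by simp
      have decomp: "ys = take p ys @ h # drop (Suc p) ys" using p by (metis id_take_nth_drop)
      have allr: "\<forall>u\<in>set (take p ys). rk u = 0"
      proof
        fix u assume "u \<in> set (take p ys)"
        then obtain q' where "q' < p" "u = ys ! q'" using p by (auto simp: in_set_conv_nth)
        thus "rk u = 0" using sorted_before[OF sr p(1), of q'] p(2) rh by simp
      qed
      have "filter (\<lambda>y. rk y = 0) ys = filter (\<lambda>y. rk y = 0) (take p ys @ h # drop (Suc p) ys)"
        using decomp by (rule arg_cong)
      also have "\<dots> = take p ys @ h # filter (\<lambda>y. rk y = 0) (drop (Suc p) ys)"
        using allr rh by simp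
      finally have e: "filter (\<lambda>y. rk y = 0) L1 = take p ys @ h # filter (\<lambda>y. rk y = 0) (drop (Suc p) ys)"
        using stab by simp
      have "sorted (map (\<lambda>i. - cd i) (filter (\<lambda>y. rk y = 0) L1))"
        by (rule sorted_filter[OF sL1])
      hence s: "sorted (map (\<lambda>i. - cd i) (take p ys @ h # filter (\<lambda>y. rk y = 0) (drop (Suc p) ys)))"
        using e by simp
      have "ys ! q \<in> set (take p ys)" using qp' p by (auto simp: in_set_conv_nth)
      from sorted_prefix_le[OF s this] have "- cd (ys ! q) \<le> - cd h" .
      hence "cd h \<le> cd (ys ! q)" by simp
      thus ?thesis using hpos rq ql by (simp add: A_def)
    qed
  qed
  hence "h \<in> set (take N ys)"
    using prefix_in_take[OF ys(1) p(1) _ _ cardA] p(2) by (simp add: A_def)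
  hence "R ! h \<in> set (survival lotz prio N R)"
    unfolding surv using hl by auto
  thus ?thesis using h(2) by blast
qed

lemma maxLO_front:
  assumes "R \<noteq> []"
  shows "\<exists>i\<in>front lotz R 0. LO (R!i) = Max (LO ` set R)"
proof -
  let ?m = "Max (LO ` set R)"
  let ?T = "{i. i < length R \<and> LO (R!i) = ?m}"
  have "?m \<in> LO ` set R" using assms by (intro Max_in) auto
  then obtain i0 where "i0 < length R" "LO (R!i0) = ?m" by (auto simp: in_set_conv_nth)
  hence Tne: "?T \<noteq> {}" by auto
  have Tf: "finite ?T" by simp
  let ?t = "Max ((\<lambda>i. TZ (R!i)) ` ?T)"
  have "?t \<in> (\<lambda>i. TZ (R!i)) ` ?T" using Tne Tf by (intro Max_in) auto
  then obtain i where i: "i \<in> ?T" "TZ (R!i) = ?t" by auto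
  have "i \<in> front lotz R 0"
  proof -
    have "\<not> dominates (lotz (R!j)) (lotz (R!i))" if j: "j < length R" for j
    proof
      assume dom: "dominates (lotz (R!j)) (lotz (R!i))"
      have "LO (R!j) \<le> ?m" using j by (intro Max_ge) auto
      hence "LO (R!j) = ?m" using dom i(1) by (auto simp: dominates_def lotz_def)
      hence "j \<in> ?T" using j by simp
      hence "TZ (R!j) \<le> ?t" using Tf by (intro Max_ge) auto
      thus False using dom i \<open>LO (R!j) = ?m\<close> by (auto simp: dominates_def lotz_def)
    qed
    thus ?thesis using i(1) by auto
  qed
  thus ?thesis using i(1) by auto
qed

lemma pareto_front:
  assumes "i < length R" "\<forall>x\<in>set R. length x = n" "lotz (R!i) = (j, n - j)" "j \<le> n"
  shows "i \<in> front lotz R 0"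
  using assms pareto_not_dominated[of _ n j] by (auto simp: front0)

lemma sum_pos_le:
  assumes xs: "distinct xs" and F: "F \<subseteq> set xs"
    and int: "\<forall>b\<in>F. 0 < pos xs b \<and> pos xs b < length xs - 1"
    and s: "sorted (map \<kappa> xs)"
  shows "(\<Sum>b\<in>F. ctrR \<kappa> xs (pos xs b)) \<le> 2"
proof -
  have inj: "inj_on (pos xs) F"
  proof (rule inj_onI)
    fix a b assume "a \<in> F" "b \<in> F" "pos xs a = pos xs b"
    thus "a = b" using pos_in[OF xs] F by (metis subsetD)
  qed
  have fin: "finite F" using F finite_subset by blast
  have "(\<Sum>b\<in>F. ctrR \<kappa> xs (pos xs b)) = (\<Sum>p\<in>pos xs ` F. ctrR \<kappa> xs p)"
    by (rule sum.reindex[OF inj, symmetric, unfolded comp_def])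
  also have "\<dots> \<le> (\<Sum>p\<in>{1..<length xs - 1}. ctrR \<kappa> xs p)"
    by (rule sum_mono2) (use int ctrR_nonneg[OF s] in auto)
  also have "\<dots> \<le> 2" by (rule sum_ctrR_le[OF s])
  finally show ?thesis .
qed

lemma cd_count:
  fixes d :: real
  assumes d: "0 < d"
  shows "real (card {b \<in> front f L 0. ereal d < crowding_dist f prio L b}) \<le> 4 + 4 / d"
proof -
  define S where "S = front f L 0"
  define xf where "xf = SF f prio fst L"
  define xs where "xs = SF f prio snd L"
  define T where "T = {b \<in> S. ereal d < crowding_dist f prio L b}"
  have Sf: "finite S" unfolding S_def by (rule finite_front0)
  have xf: "distinct xf" "set xf = S" "sorted (map (\<lambda>y. fst (f (L!y))) xf)"
    unfolding xf_def S_def using SF_distinct SF_set SF_sorted by auto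
  have xs: "distinct xs" "set xs = S" "sorted (map (\<lambda>y. snd (f (L!y))) xs)"
    unfolding xs_def S_def using SF_distinct SF_set SF_sorted by auto
  have lens: "length xf = card S" "length xs = card S"
    using xf xs by (metis distinct_card)+
  define l where "l = card S"
  define int where "int b \<longleftrightarrow> 0 < pos xf b \<and> pos xf b < l - 1 \<and> 0 < pos xs b \<and> pos xs b < l - 1" for b
  define F where "F = {b \<in> T. int b}"
  define E where "E = set [xf!0, xf!(l-1), xs!0, xs!(l-1)]"
  have TEF: "T \<subseteq> E \<union> F"
  proof
    fix b assume bT: "b \<in> T"
    hence bS: "b \<in> S" by (simp add: T_def)
    have pf: "pos xf b < l" "xf ! pos xf b = b" using pos_in[OF xf(1)] xf(2) bS lens l_def by auto
    have ps: "pos xs b < l" "xs ! pos xs b = b" using pos_in[OF xs(1)] xs(2) bS lens l_def by auto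
    show "b \<in> E \<union> F"
    proof (cases "int b")
      case True then show ?thesis using bT by (simp add: F_def)
    next
      case False
      hence "pos xf b = 0 \<or> pos xf b = l - 1 \<or> pos xs b = 0 \<or> pos xs b = l - 1"
        using pf(1) ps(1) unfolding int_def by linarith
      then show ?thesis using pf(2) ps(2) unfolding E_def by auto
    qed
  qed
  have cE: "card E \<le> 4" unfolding E_def using card_length[of "[xf!0, xf!(l-1), xs!0, xs!(l-1)]"] by simp
  have Ff: "finite F" using Sf by (simp add: F_def T_def)
  have cdF: "crowding_dist f prio L b = ereal (ctrR (\<lambda>y. fst (f (L!y))) xf (pos xf b) + ctrR (\<lambda>y. snd (f (L!y))) xs (pos xs b))"
    if "b \<in> F" for b
  proof -
    have bS: "b \<in> front f L 0" using that by (simp add: F_def T_def S_def)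
    have "int b" using that by (simp add: F_def)
    hence "pos xf b \<noteq> 0" "pos xf b \<noteq> length xf - 1" "pos xs b \<noteq> 0" "pos xs b \<noteq> length xs - 1"
      unfolding int_def using lens l_def by auto
    thus ?thesis unfolding cd_front0[OF bS] cd_contrib_K contribK_def xf_def[symmetric] xs_def[symmetric]
      by simp
  qed
  have "real (card F) * d \<le> (\<Sum>b\<in>F. ctrR (\<lambda>y. fst (f (L!y))) xf (pos xf b) + ctrR (\<lambda>y. snd (f (L!y))) xs (pos xs b))"
  proof -
    have "(\<Sum>b\<in>F. d) \<le> (\<Sum>b\<in>F. ctrR (\<lambda>y. fst (f (L!y))) xf (pos xf b) + ctrR (\<lambda>y. snd (f (L!y))) xs (pos xs b))"
    proof (rule sum_mono)
      fix b assume bF: "b \<in> F"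
      hence "ereal d < crowding_dist f prio L b" by (simp add: F_def T_def)
      thus "d \<le> ctrR (\<lambda>y. fst (f (L!y))) xf (pos xf b) + ctrR (\<lambda>y. snd (f (L!y))) xs (pos xs b)"
        using cdF[OF bF] by simp
    qed
    thus ?thesis by simp
  qed
  also have "\<dots> = (\<Sum>b\<in>F. ctrR (\<lambda>y. fst (f (L!y))) xf (pos xf b)) + (\<Sum>b\<in>F. ctrR (\<lambda>y. snd (f (L!y))) xs (pos xs b))"
    by (rule sum.distrib)
  also have "\<dots> \<le> 2 + 2"
  proof (rule add_mono)
    show "(\<Sum>b\<in>F. ctrR (\<lambda>y. fst (f (L!y))) xf (pos xf b)) \<le> 2"
      by (rule sum_pos_le[OF xf(1) _ _ xf(3)]) (auto simp: F_def T_def int_def xf(2) lens l_def)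
    show "(\<Sum>b\<in>F. ctrR (\<lambda>y. snd (f (L!y))) xs (pos xs b)) \<le> 2"
      by (rule sum_pos_le[OF xs(1) _ _ xs(3)]) (auto simp: F_def T_def int_def xs(2) lens l_def)
  qed
  finally have "real (card F) * d \<le> 4" by simp
  hence cF: "real (card F) \<le> 4 / d" using d by (simp add: le_divide_eq)
  have "card T \<le> card (E \<union> F)" by (rule card_mono) (use TEF Ff E_def in auto)
  also have "\<dots> \<le> card E + card F" by (rule card_Un_le)
  finally have "real (card T) \<le> real (card E) + real (card F)" by linarith
  thus ?thesis using cE cF unfolding T_def S_def by linarith
qed

lemma pmf_bind_ge_point: "pmf M a * pmf (f a) x \<le> pmf (bind_pmf M f) x"
proof -
  have "ennreal (pmf M a * pmf (f a) x) = ennreal (pmf (f a) x) * emeasure (measure_pmf M) {a}"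
    by (simp add: emeasure_pmf_single ennreal_mult mult.commute)
  also have "\<dots> = \<integral>\<^sup>+ a'. ennreal (pmf (f a) x) * indicator {a} a' \<partial>measure_pmf M"
    by (simp add: nn_integral_cmult_indicator)
  also have "\<dots> \<le> \<integral>\<^sup>+ a'. ennreal (pmf (f a') x) \<partial>measure_pmf M"
    by (intro nn_integral_mono) (auto split: split_indicator)
  also have "\<dots> = ennreal (pmf (bind_pmf M f) x)" by (simp add: ennreal_pmf_bind)
  finally show ?thesis by (simp add: ennreal_le_iff)
qed

lemma pmf_bind_ge_unif:
  assumes "\<And>a. a \<in> set_pmf M \<Longrightarrow> c \<le> pmf (f a) x"
  shows "c \<le> pmf (bind_pmf M f) x"
proof (cases "0 \<le> c")
  case False
  then show ?thesis using pmf_nonneg[of "bind_pmf M f" x] by linarith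
next
  case True
  have "ennreal c = \<integral>\<^sup>+ a. ennreal c \<partial>measure_pmf M"
    by (simp add: measure_pmf.emeasure_space_1)
  also have "\<dots> \<le> \<integral>\<^sup>+ a. ennreal (pmf (f a) x) \<partial>measure_pmf M"
    by (intro nn_integral_mono_AE) (auto simp: AE_measure_pmf_iff assms)
  also have "\<dots> = ennreal (pmf (bind_pmf M f) x)" by (simp add: ennreal_pmf_bind)
  finally show ?thesis by (simp add: ennreal_le_iff)
qed

lemma pmf_map_ge: "pmf M a \<le> pmf (map_pmf g M) (g a)"
proof -
  have "pmf M a = measure_pmf.prob M {a}" by (simp add: measure_pmf_single)
  also have "\<dots> \<le> measure_pmf.prob M (g -` {g a})" by (intro measure_pmf.finite_measure_mono) auto
  finally show ?thesis by (simp add: pmf_map)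
qed

lemma pmf_seq_ge:
  "length ys = length ps \<Longrightarrow> (\<Prod>i<length ps. pmf (ps!i) (ys!i)) \<le> pmf (seq_pmf ps) ys"
proof (induction ps arbitrary: ys)
  case Nil
  then show ?case by simp
next
  case (Cons p ps)
  then obtain y ys' where ys: "ys = y # ys'" "length ys' = length ps" by (cases ys) auto
  have "(\<Prod>i<Suc (length ps). pmf ((p#ps)!i) ((y#ys')!i)) = pmf p y * (\<Prod>i<length ps. pmf (ps!i) (ys'!i))"
    by (subst prod.lessThan_Suc_shift) simp
  hence "(\<Prod>i<length (p#ps). pmf ((p#ps)!i) (ys!i)) = pmf p y * (\<Prod>i<length ps. pmf (ps!i) (ys'!i))"
    using ys by simp
  also have "\<dots> \<le> pmf p y * pmf (seq_pmf ps) ys'"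
    by (intro mult_left_mono Cons.IH ys(2)) simp
  also have "\<dots> = pmf p y * (pmf (seq_pmf ps) ys' * pmf (return_pmf (y # ys')) (y # ys'))" by simp
  also have "\<dots> \<le> pmf p y * pmf (bind_pmf (seq_pmf ps) (\<lambda>xs. return_pmf (y # xs))) (y # ys')"
    by (intro mult_left_mono pmf_bind_ge_point) simp
  also have "\<dots> \<le> pmf (seq_pmf (p # ps)) ys"
    unfolding ys seq_pmf.simps by (rule pmf_bind_ge_point[of p y "\<lambda>x. bind_pmf (seq_pmf ps) (\<lambda>xs. return_pmf (x # xs))"])
  finally show ?case .
qed

lemma prod_one_special:
  assumes "k < n"
  shows "(\<Prod>i<n. if i = k then a else b) = a * b ^ (n - 1)"
proof -
  have "(\<Prod>i<n. if i = k then a else b) = (if k = k then a else b) * (\<Prod>i\<in>{..<n} - {k}. if i = k then a else b)"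
    by (rule prod.remove) (use assms in auto)
  also have "(\<Prod>i\<in>{..<n} - {k}. if i = k then a else b) = (\<Prod>i\<in>{..<n} - {k}. b)"
    by (intro prod.cong) auto
  also have "\<dots> = b ^ (n - 1)" using assms by simp
  finally show ?thesis by simp
qed

lemma mutate_ge:
  assumes n: "length x = n" and k: "k < n"
  shows "(1 / real n) * (1 - 1 / real n) ^ (n - 1) \<le> pmf (mutate n x) (x[k := \<not> x ! k])"
proof -
  let ?ps = "map (\<lambda>b. map_pmf (\<lambda>c. if c then \<not> b else b) (bernoulli_pmf (1 / real n))) x"
  let ?y = "x[k := \<not> x ! k]"
  have n1: "1 \<le> real n" using k by simp
  have q: "0 \<le> 1 / real n" "1 / real n \<le> 1" using n1 by auto
  have "(1 / real n) * (1 - 1 / real n) ^ (n - 1) = (\<Prod>i<n. if i = k then 1 / real n else 1 - 1 / real n)"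
    using prod_one_special[OF k, of "1 / real n" "1 - 1 / real n"] by simp
  also have "\<dots> \<le> (\<Prod>i<length ?ps. pmf (?ps!i) (?y!i))"
  proof (unfold length_map n, rule prod_mono)
    fix i assume i: "i \<in> {..<n}"
    have e: "?ps ! i = map_pmf (\<lambda>c. if c then \<not> x!i else x!i) (bernoulli_pmf (1 / real n))"
      using i n by simp
    show "0 \<le> (if i = k then 1 / real n else 1 - 1 / real n) \<and>
          (if i = k then 1 / real n else 1 - 1 / real n) \<le> pmf (?ps ! i) (?y ! i)"
    proof (cases "i = k")
      case True
      have "pmf (bernoulli_pmf (1 / real n)) True \<le> pmf (?ps ! i) ((\<lambda>c. if c then \<not> x!i else x!i) True)"
        unfolding e by (rule pmf_map_ge)
      thus ?thesis using True q n k by (simp add: pmf_bernoulli_True)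
    next
      case False
      have "pmf (bernoulli_pmf (1 / real n)) False \<le> pmf (?ps ! i) ((\<lambda>c. if c then \<not> x!i else x!i) False)"
        unfolding e by (rule pmf_map_ge)
      thus ?thesis using False q n i by (simp add: pmf_bernoulli_False)
    qed
  qed
  also have "\<dots> \<le> pmf (seq_pmf ?ps) ?y" by (rule pmf_seq_ge) (simp add: n)
  finally show ?thesis by (simp add: mutate_def)
qed

lemma exp_bound: "1 / 3 \<le> (1 - 1 / real n) ^ (n - 1)"
proof (cases "n \<le> 1")
  case True
  then show ?thesis by (cases n) auto
next
  case False
  define m where "m = n - 1"
  have m: "1 \<le> m" "n = m + 1" using False by (auto simp: m_def)
  have eq: "1 - 1 / real n = 1 / (1 + 1 / real m)" using m by (simp add: field_simps)
  have "(1 + 1 / real m) ^ m \<le> exp (1 / real m) ^ m"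
    by (intro power_mono exp_ge_add_one_self) auto
  also have "\<dots> = exp (real m * (1 / real m))" by (rule exp_of_nat_mult[symmetric])
  also have "\<dots> = exp 1" using m by simp
  also have "\<dots> \<le> 3" using e_less_272 by simp
  finally have b: "(1 + 1 / real m) ^ m \<le> 3" .
  have "0 < 1 + 1 / real m" using m by (simp add: add_pos_nonneg)
  hence pos: "0 < (1 + 1 / real m) ^ m" by (rule zero_less_power)
  have "(1 - 1 / real n) ^ (n - 1) = 1 / (1 + 1 / real m) ^ m"
    unfolding eq m_def[symmetric] by (simp add: power_one_over)
  also have "\<dots> \<ge> 1 / 3" using b pos by (intro divide_left_mono) auto
  finally show ?thesis .
qed

lemma mutate_ge3:
  assumes "length x = n" "k < n"
  shows "1 / (3 * real n) \<le> pmf (mutate n x) (x[k := \<not> x ! k])"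
proof -
  have "1 / (3 * real n) = (1 / real n) * (1 / 3)" by simp
  also have "\<dots> \<le> (1 / real n) * (1 - 1 / real n) ^ (n - 1)"
    by (intro mult_left_mono exp_bound) auto
  also have "\<dots> \<le> pmf (mutate n x) (x[k := \<not> x ! k])" by (rule mutate_ge[OF assms])
  finally show ?thesis .
qed

lemma crossover_id: "1 / 10 \<le> pmf (crossover n a b) (a, b)"
proof -
  have "pmf (bernoulli_pmf (9/10)) False * pmf (return_pmf (a, b)) (a, b) \<le> pmf (crossover n a b) (a, b)"
    unfolding crossover_def
    by (rule order_trans[OF _ pmf_bind_ge_point[of _ False]]) simp
  thus ?thesis by (simp add: pmf_bernoulli_False)
qed

definition V1 :: "nat \<Rightarrow> bool list \<Rightarrow> bool list \<Rightarrow> bool list pmf" where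
  "V1 n a b = bind_pmf (crossover n a b) (\<lambda>c. mutate n (fst c))"

definition Gk :: "nat \<Rightarrow> bool list pmf \<Rightarrow> nat \<Rightarrow> bool list list pmf" where
  "Gk n T k = bind_pmf (seq_pmf (replicate (2 * k) T)) (variation n)"

definition Wp :: "nat \<Rightarrow> bool list pmf \<Rightarrow> bool list pmf" where
  "Wp n T = bind_pmf T (\<lambda>a. bind_pmf T (\<lambda>b. V1 n a b))"

lemma ind_cons2:
  "indicator {Q. y \<notin> set Q} (m1 # m2 # r) \<le> (indicator {m. m \<noteq> y} m1 * indicator {Q. y \<notin> set Q} r :: ennreal)"
  by (auto split: split_indicator)

lemma var_inner:
  "emeasure (measure_pmf (bind_pmf (mutate n c1) (\<lambda>m1. bind_pmf (mutate n c2) (\<lambda>m2.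
       bind_pmf V (\<lambda>r. return_pmf (m1 # m2 # r)))))) {Q. y \<notin> set Q}
   \<le> emeasure (measure_pmf (mutate n c1)) {m. m \<noteq> y} * emeasure (measure_pmf V) {Q. y \<notin> set Q}"
proof -
  define X where "X = {Q. y \<notin> set Q}"
  define eV where "eV = emeasure (measure_pmf V) X"
  have a: "emeasure (measure_pmf (bind_pmf V (\<lambda>r. return_pmf (m1 # m2 # r)))) X \<le> indicator {m. m \<noteq> y} m1 * eV"
    for m1 m2
  proof -
    have "emeasure (measure_pmf (bind_pmf V (\<lambda>r. return_pmf (m1 # m2 # r)))) X
        = \<integral>\<^sup>+ r. indicator X (m1 # m2 # r) \<partial>measure_pmf V"
      by (simp add: emeasure_bind_pmf emeasure_return_pmf)
    also have "\<dots> \<le> \<integral>\<^sup>+ r. indicator {m. m \<noteq> y} m1 * indicator X r \<partial>measure_pmf V"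
      unfolding X_def by (intro nn_integral_mono ind_cons2)
    also have "\<dots> = indicator {m. m \<noteq> y} m1 * eV"
      unfolding eV_def by (simp add: nn_integral_cmult)
    finally show ?thesis .
  qed
  have b: "emeasure (measure_pmf (bind_pmf (mutate n c2) (\<lambda>m2. bind_pmf V (\<lambda>r. return_pmf (m1 # m2 # r))))) X
       \<le> indicator {m. m \<noteq> y} m1 * eV" for m1
  proof -
    have "emeasure (measure_pmf (bind_pmf (mutate n c2) (\<lambda>m2. bind_pmf V (\<lambda>r. return_pmf (m1 # m2 # r))))) X
        = \<integral>\<^sup>+ m2. emeasure (measure_pmf (bind_pmf V (\<lambda>r. return_pmf (m1 # m2 # r)))) X \<partial>measure_pmf (mutate n c2)"
      by (simp add: emeasure_bind_pmf)
    also have "\<dots> \<le> \<integral>\<^sup>+ m2. indicator {m. m \<noteq> y} m1 * eV \<partial>measure_pmf (mutate n c2)"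
      by (intro nn_integral_mono a)
    also have "\<dots> = indicator {m. m \<noteq> y} m1 * eV" by (simp add: measure_pmf.emeasure_space_1)
    finally show ?thesis .
  qed
  have "emeasure (measure_pmf (bind_pmf (mutate n c1) (\<lambda>m1. bind_pmf (mutate n c2) (\<lambda>m2.
       bind_pmf V (\<lambda>r. return_pmf (m1 # m2 # r)))))) X
      = \<integral>\<^sup>+ m1. emeasure (measure_pmf (bind_pmf (mutate n c2) (\<lambda>m2. bind_pmf V (\<lambda>r. return_pmf (m1 # m2 # r))))) X \<partial>measure_pmf (mutate n c1)"
    by (simp add: emeasure_bind_pmf)
  also have "\<dots> \<le> \<integral>\<^sup>+ m1. indicator {m. m \<noteq> y} m1 * eV \<partial>measure_pmf (mutate n c1)"
    by (intro nn_integral_mono b)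
  also have "\<dots> = emeasure (measure_pmf (mutate n c1)) {m. m \<noteq> y} * eV"
    by (simp add: nn_integral_multc)
  finally show ?thesis unfolding X_def eV_def .
qed

lemma var_step:
  "emeasure (measure_pmf (variation n (a # b # rest))) {Q. y \<notin> set Q}
   \<le> emeasure (measure_pmf (V1 n a b)) {m. m \<noteq> y} * emeasure (measure_pmf (variation n rest)) {Q. y \<notin> set Q}"
proof -
  define eV where "eV = emeasure (measure_pmf (variation n rest)) {Q. y \<notin> set Q}"
  have "emeasure (measure_pmf (variation n (a # b # rest))) {Q. y \<notin> set Q}
      = \<integral>\<^sup>+ c. emeasure (measure_pmf (bind_pmf (mutate n (fst c)) (\<lambda>m1. bind_pmf (mutate n (snd c)) (\<lambda>m2.
       bind_pmf (variation n rest) (\<lambda>r. return_pmf (m1 # m2 # r)))))) {Q. y \<notin> set Q} \<partial>measure_pmf (crossover n a b)"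
    by (simp add: emeasure_bind_pmf split_beta)
  also have "\<dots> \<le> \<integral>\<^sup>+ c. emeasure (measure_pmf (mutate n (fst c))) {m. m \<noteq> y} * eV \<partial>measure_pmf (crossover n a b)"
    unfolding eV_def by (intro nn_integral_mono var_inner)
  also have "\<dots> = emeasure (measure_pmf (V1 n a b)) {m. m \<noteq> y} * eV"
    by (simp add: nn_integral_multc V1_def emeasure_bind_pmf)
  finally show ?thesis unfolding eV_def .
qed

lemma nn_integral_seq_cons:
  "(\<integral>\<^sup>+ s. h s \<partial>measure_pmf (seq_pmf (p # ps))) = (\<integral>\<^sup>+ a. \<integral>\<^sup>+ xs. h (a # xs) \<partial>measure_pmf (seq_pmf ps) \<partial>measure_pmf p)"
proof -
  have "seq_pmf (p # ps) = bind_pmf p (\<lambda>a. map_pmf (Cons a) (seq_pmf ps))"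
    by (simp add: map_pmf_def)
  thus ?thesis by (simp add: nn_integral_bind_pmf nn_integral_map_pmf)
qed

lemma Gk_step:
  "emeasure (measure_pmf (Gk n T (Suc k))) {Q. y \<notin> set Q}
    \<le> emeasure (measure_pmf (Wp n T)) {m. m \<noteq> y} * emeasure (measure_pmf (Gk n T k)) {Q. y \<notin> set Q}"
proof -
  define X where "X = {Q. y \<notin> set Q}"
  define eG where "eG = emeasure (measure_pmf (Gk n T k)) X"
  define R where "R = replicate (2 * k) T"
  have rep: "replicate (2 * Suc k) T = T # T # R" by (simp add: R_def)
  have eGi: "eG = \<integral>\<^sup>+ xs. emeasure (measure_pmf (variation n xs)) X \<partial>measure_pmf (seq_pmf R)"
    unfolding eG_def Gk_def R_def by (simp add: emeasure_bind_pmf)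
  have "emeasure (measure_pmf (Gk n T (Suc k))) X
     = \<integral>\<^sup>+ s. emeasure (measure_pmf (variation n s)) X \<partial>measure_pmf (seq_pmf (T # T # R))"
    unfolding Gk_def rep by (simp add: emeasure_bind_pmf)
  also have "\<dots> = \<integral>\<^sup>+ a. \<integral>\<^sup>+ b. \<integral>\<^sup>+ xs. emeasure (measure_pmf (variation n (a # b # xs))) X
                     \<partial>measure_pmf (seq_pmf R) \<partial>measure_pmf T \<partial>measure_pmf T"
    by (simp add: nn_integral_seq_cons)
  also have "\<dots> \<le> \<integral>\<^sup>+ a. \<integral>\<^sup>+ b. \<integral>\<^sup>+ xs. emeasure (measure_pmf (V1 n a b)) {m. m \<noteq> y} *
                     emeasure (measure_pmf (variation n xs)) X
                     \<partial>measure_pmf (seq_pmf R) \<partial>measure_pmf T \<partial>measure_pmf T"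
    unfolding X_def by (intro nn_integral_mono var_step)
  also have "\<dots> = \<integral>\<^sup>+ a. \<integral>\<^sup>+ b. emeasure (measure_pmf (V1 n a b)) {m. m \<noteq> y} * eG
                     \<partial>measure_pmf T \<partial>measure_pmf T"
    unfolding eGi by (simp add: nn_integral_cmult)
  also have "\<dots> = emeasure (measure_pmf (Wp n T)) {m. m \<noteq> y} * eG"
    by (simp add: nn_integral_multc Wp_def emeasure_bind_pmf)
  finally show ?thesis unfolding X_def eG_def .
qed

lemma Gk_zero: "emeasure (measure_pmf (Gk n T 0)) {Q. y \<notin> set Q} = 1"
  by (simp add: Gk_def emeasure_return_pmf)

lemma emeasure_neq: "emeasure (measure_pmf M) {m. m \<noteq> y} = ennreal (1 - pmf M y)"
proof -
  have "{m. m \<noteq> y} = space (measure_pmf M) - {y}" by auto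
  hence "measure_pmf.prob M {m. m \<noteq> y} = 1 - measure_pmf.prob M {y}"
    using measure_pmf.prob_compl[of "{y}" M] by simp
  thus ?thesis by (simp add: measure_pmf.emeasure_eq_measure measure_pmf_single)
qed

lemma Gk_bound:
  assumes r: "r \<le> pmf (Wp n T) y" "0 \<le> r"
  shows "emeasure (measure_pmf (Gk n T k)) {Q. y \<notin> set Q} \<le> ennreal ((1 - r) ^ k)"
proof (induction k)
  case 0
  then show ?case by (simp add: Gk_zero)
next
  case (Suc k)
  have p1: "pmf (Wp n T) y \<le> 1" by (rule pmf_le_1)
  have "emeasure (measure_pmf (Gk n T (Suc k))) {Q. y \<notin> set Q}
      \<le> emeasure (measure_pmf (Wp n T)) {m. m \<noteq> y} * emeasure (measure_pmf (Gk n T k)) {Q. y \<notin> set Q}"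
    by (rule Gk_step)
  also have "\<dots> \<le> ennreal (1 - r) * ennreal ((1 - r) ^ k)"
    unfolding emeasure_neq by (intro mult_mono Suc.IH ennreal_leI) (use r in auto)
  also have "\<dots> = ennreal ((1 - r) ^ Suc k)"
    using r p1 by (simp add: ennreal_mult[symmetric] mult.commute)
  finally show ?case .
qed

lemma Gk_success:
  assumes r: "r \<le> pmf (Wp n T) y" "0 \<le> r"
  shows "1 - (1 - r) ^ k \<le> measure_pmf.prob (Gk n T k) {Q. y \<in> set Q}"
proof -
  have p1: "pmf (Wp n T) y \<le> 1" by (rule pmf_le_1)
  have "ennreal (measure_pmf.prob (Gk n T k) {Q. y \<notin> set Q}) \<le> ennreal ((1 - r) ^ k)"
    using Gk_bound[OF r, of k] by (simp add: measure_pmf.emeasure_eq_measure)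
  hence a: "measure_pmf.prob (Gk n T k) {Q. y \<notin> set Q} \<le> (1 - r) ^ k"
    using r p1 by (simp add: ennreal_le_iff)
  have "{Q. y \<in> set Q} = space (measure_pmf (Gk n T k)) - {Q. y \<notin> set Q}" by auto
  hence "measure_pmf.prob (Gk n T k) {Q. y \<in> set Q} = 1 - measure_pmf.prob (Gk n T k) {Q. y \<notin> set Q}"
    using measure_pmf.prob_compl[of "{Q. y \<notin> set Q}" "Gk n T k"] by simp
  thus ?thesis using a by simp
qed

lemma Wp_ge:
  assumes "length x = n" "k < n"
  shows "pmf T x * (1 / 10) * (1 / (3 * real n)) \<le> pmf (Wp n T) (x[k := \<not> x ! k])"
proof -
  let ?y = "x[k := \<not> x ! k]"
  have v: "(1 / 10) * (1 / (3 * real n)) \<le> pmf (V1 n x b) ?y" for b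
  proof -
    have "(1 / 10) * (1 / (3 * real n)) \<le> pmf (crossover n x b) (x, b) * pmf (mutate n (fst (x, b))) ?y"
      using crossover_id[of n x b] mutate_ge3[OF assms] by (intro mult_mono) auto
    also have "\<dots> \<le> pmf (V1 n x b) ?y" unfolding V1_def by (rule pmf_bind_ge_point)
    finally show ?thesis .
  qed
  have "(1 / 10) * (1 / (3 * real n)) \<le> pmf (bind_pmf T (\<lambda>b. V1 n x b)) ?y"
    by (rule pmf_bind_ge_unif) (rule v)
  hence "pmf T x * ((1 / 10) * (1 / (3 * real n))) \<le> pmf T x * pmf (bind_pmf T (\<lambda>b. V1 n x b)) ?y"
    by (intro mult_left_mono) auto
  also have "\<dots> \<le> pmf (Wp n T) ?y" unfolding Wp_def by (rule pmf_bind_ge_point)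
  finally show ?thesis by (simp add: mult.assoc)
qed

lemma pmf_bind_pmf_of_set:
  assumes "finite U" "U \<noteq> {}"
  shows "pmf (bind_pmf (pmf_of_set U) g) z = (\<Sum>b\<in>U. pmf (g b) z) / real (card U)"
  using assms by (simp add: pmf_bind integral_pmf_of_set)

lemma pmf_of_set_pair: "1 / 2 \<le> pmf (pmf_of_set {i, b}) i"
  by (cases "i = b") (auto simp: pmf_of_set)

lemma tournament_ge:
  assumes i: "i < length P"
  shows "real (card {b. b < length P \<and> \<not> crowded_better f prio P b i}) / (2 * real (length P) ^ 2)
           \<le> pmf (tournament f prio P) (P ! i)"
proof -
  define N where "N = length P"
  define U where "U = {..<N}"
  define cb where "cb = crowded_better f prio P"
  define X where "X a b = (if cb a b then return_pmf a else if cb b a then return_pmf b else pmf_of_set {a, b})" for a b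
  have "0 < N" using i unfolding N_def by linarith
  hence U: "finite U" "U \<noteq> {}" "card U = N" by (auto simp: U_def)
  have N0: "0 < real N" using \<open>0 < N\<close> by simp
  have t: "tournament f prio P = bind_pmf (pmf_of_set U) (\<lambda>a. bind_pmf (pmf_of_set U) (\<lambda>b. map_pmf (\<lambda>j. P ! j) (X a b)))"
    unfolding tournament_def U_def N_def X_def cb_def by simp
  have xb: "(if \<not> cb b i then 1 / 2 else 0) \<le> pmf (map_pmf (\<lambda>j. P ! j) (X i b)) (P ! i)" for b
  proof (cases "cb b i")
    case True then show ?thesis by simp
  next
    case False
    have "1 / 2 \<le> pmf (X i b) i"
      using False pmf_of_set_pair[of i b] by (auto simp: X_def)
    also have "\<dots> \<le> pmf (map_pmf (\<lambda>j. P ! j) (X i b)) (P ! i)" by (rule pmf_map_ge)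
    finally show ?thesis using False by simp
  qed
  have "real (card {b \<in> U. \<not> cb b i}) / 2 = (\<Sum>b\<in>U. if \<not> cb b i then 1 / 2 else 0)"
    using U by (simp add: sum.If_cases Int_def)
  also have "\<dots> \<le> (\<Sum>b\<in>U. pmf (map_pmf (\<lambda>j. P ! j) (X i b)) (P ! i))"
    by (rule sum_mono) (rule xb)
  finally have s: "real (card {b \<in> U. \<not> cb b i}) / 2 \<le> (\<Sum>b\<in>U. pmf (map_pmf (\<lambda>j. P ! j) (X i b)) (P ! i))" .
  have "real (card {b \<in> U. \<not> cb b i}) / (2 * real N ^ 2)
      = (1 / real N) * ((real (card {b \<in> U. \<not> cb b i}) / 2) / real N)"
    by (simp add: power2_eq_square)
  also have "\<dots> \<le> (1 / real N) * ((\<Sum>b\<in>U. pmf (map_pmf (\<lambda>j. P ! j) (X i b)) (P ! i)) / real N)"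
    using s N0 by (intro mult_left_mono divide_right_mono) auto
  also have "\<dots> = pmf (pmf_of_set U) i * pmf (bind_pmf (pmf_of_set U) (\<lambda>b. map_pmf (\<lambda>j. P ! j) (X i b))) (P ! i)"
    using U i by (simp add: pmf_bind_pmf_of_set pmf_of_set U_def N_def)
  also have "\<dots> \<le> pmf (tournament f prio P) (P ! i)"
    unfolding t by (rule pmf_bind_ge_point)
  finally show ?thesis unfolding U_def N_def cb_def by (simp add: lessThan_def)
qed

lemma tournament_support:
  assumes "P \<noteq> []"
  shows "set_pmf (tournament f prio P) \<subseteq> set P"
proof -
  have "finite {..<length P}" "{..<length P} \<noteq> {}" using assms by auto
  thus ?thesis unfolding tournament_def
    by (auto simp: set_pmf_of_set split: if_splits)
qed

lemma seq_support:
  "xs \<in> set_pmf (seq_pmf ps) \<Longrightarrow> length xs = length ps \<and> (\<forall>i<length ps. xs ! i \<in> set_pmf (ps ! i))"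
proof (induction ps arbitrary: xs)
  case Nil
  then show ?case by simp
next
  case (Cons p ps)
  then obtain a xs' where "xs = a # xs'" "a \<in> set_pmf p" "xs' \<in> set_pmf (seq_pmf ps)" by auto
  with Cons.IH[of xs'] show ?case by (auto simp: nth_Cons split: nat.splits)
qed

lemma seq_rep_support:
  "xs \<in> set_pmf (seq_pmf (replicate N T)) \<Longrightarrow> length xs = N \<and> set xs \<subseteq> set_pmf T"
  using seq_support[of xs "replicate N T"] by (auto simp: in_set_conv_nth)

lemma mutate_support: "z \<in> set_pmf (mutate n x) \<Longrightarrow> length z = length x"
  unfolding mutate_def using seq_support by fastforce

lemma crossover_support:
  assumes "c \<in> set_pmf (crossover n a b)" "length a = m" "length b = m"
  shows "length (fst c) = m \<and> length (snd c) = m"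
  using assms unfolding crossover_def
  by (auto simp: set_pmf_of_set split: if_splits)

lemma variation_support:
  "Q \<in> set_pmf (variation n S) \<Longrightarrow> \<forall>x\<in>set S. length x = m \<Longrightarrow> \<forall>q\<in>set Q. length q = m"
proof (induction n S arbitrary: Q rule: variation.induct)
  case (1 n x y rest)
  from 1(2) obtain c m1 m2 r where c: "c \<in> set_pmf (crossover n x y)" and
    m1: "m1 \<in> set_pmf (mutate n (fst c))" and m2: "m2 \<in> set_pmf (mutate n (snd c))"
    and r: "r \<in> set_pmf (variation n rest)" and Q: "Q = m1 # m2 # r"
    by (auto simp: split_beta)
  have "length (fst c) = m \<and> length (snd c) = m" using crossover_support[OF c] 1(3) by simp
  moreover have "\<forall>q\<in>set r. length q = m" using 1(1)[OF _ _ _ _ r] 1(3) c m1 m2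
    by (metis list.set_intros(2) prod.exhaust_sel)
  ultimately show ?case using Q mutate_support[OF m1] mutate_support[OF m2] by auto
next
  case ("2_1" n)
  then show ?case by simp
next
  case ("2_2" n v)
  then show ?case by simp
qed

declare front.simps[simp del] remaining.simps[simp del]

definition maxLO :: "bool list list \<Rightarrow> nat" where
  "maxLO P = Max (LO ` set P)"

definition covset :: "nat \<Rightarrow> bool list list \<Rightarrow> nat set" where
  "covset n P = {j. j \<le> n \<and> (\<exists>x\<in>set P. lotz x = (j, n - j))}"

definition Phi :: "nat \<Rightarrow> bool list list \<Rightarrow> nat" where
  "Phi n P = maxLO P + card (covset n P)"

definition good :: "nat \<Rightarrow> nat \<Rightarrow> bool list list \<Rightarrow> bool" where
  "good n N P \<longleftrightarrow> length P = N \<and> (\<forall>x\<in>set P. length x = n)"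

lemma covset_sub: "covset n P \<subseteq> {..n}" and covset_fin: "finite (covset n P)"
  by (auto simp: covset_def intro: finite_subset[of _ "{..n}"])

lemma card_covset: "card (covset n P) \<le> n + 1"
  using card_mono[OF _ covset_sub, of n P] by simp

lemma maxLO_le: "good n N P \<Longrightarrow> 0 < N \<Longrightarrow> maxLO P \<le> n"
  unfolding maxLO_def good_def using LO_le by (cases "set P = {}") (auto intro!: Max.boundedI)

lemma Phi_le: "good n N P \<Longrightarrow> 0 < N \<Longrightarrow> Phi n P \<le> 2 * n + 1"
proof -
  assume a: "good n N P" "0 < N"
  show ?thesis using maxLO_le[OF a] card_covset[of n P] unfolding Phi_def by linarith
qed

lemma covers_iff: "covers_front n P \<longleftrightarrow> covset n P = {..n}"
  unfolding covers_front_def covset_def by auto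

lemma Phi_max_covers:
  assumes "good n N P" "0 < N" "Phi n P = 2 * n + 1"
  shows "covers_front n P"
proof -
  have "card (covset n P) = n + 1" using assms(3) maxLO_le[OF assms(1,2)] card_covset[of n P] unfolding Phi_def by linarith
  hence "covset n P = {..n}" using covset_sub by (intro card_subset_eq) auto
  thus ?thesis by (simp add: covers_iff)
qed

lemma maxLO_ge: "x \<in> set P \<Longrightarrow> LO x \<le> maxLO P"
  unfolding maxLO_def by (intro Max_ge) auto

lemma survival_props:
  fixes prio :: "bool list list \<Rightarrow> nat \<Rightarrow> nat" and P Q :: "bool list list" and n N :: nat
  assumes gP: "good n N P" and Q: "\<forall>q\<in>set Q. length q = n" and Nn: "2 * (n + 1) \<le> N" and n0: "0 < n"
  defines "P' \<equiv> survival lotz prio N (P @ Q)"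
  shows "good n N P'" "maxLO (P @ Q) \<le> maxLO P'" "covset n (P @ Q) \<subseteq> covset n P'"
proof -
  let ?R = "P @ Q"
  have NR: "N \<le> length ?R" using gP by (simp add: good_def)
  have lenR: "\<forall>x\<in>set ?R. length x = n" using gP Q by (auto simp: good_def)
  have ls: "length P' = N" "set P' \<subseteq> set ?R" using survival_len_set[OF NR] unfolding P'_def by auto
  show "good n N P'" using ls lenR by (auto simp: good_def)
  have Rne: "?R \<noteq> []" using NR Nn by auto
  obtain i where i: "i \<in> front lotz ?R 0" "LO (?R ! i) = Max (LO ` set ?R)" using maxLO_front[OF Rne] by blast
  obtain z where z: "z \<in> set P'" "lotz z = lotz (?R ! i)"
    using survival_keeps[OF NR Nn lenR n0 i(1)] unfolding P'_def by blast
  have "LO z = maxLO ?R" using z i(2) by (simp add: lotz_def maxLO_def)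
  thus "maxLO ?R \<le> maxLO P'" using maxLO_ge[OF z(1)] by simp
  show "covset n ?R \<subseteq> covset n P'"
  proof
    fix j assume "j \<in> covset n ?R"
    then obtain x where x: "x \<in> set ?R" "lotz x = (j, n - j)" "j \<le> n" by (auto simp: covset_def)
    then obtain i where i: "i < length ?R" "?R ! i = x" by (meson in_set_conv_nth)
    have "i \<in> front lotz ?R 0" by (rule pareto_front[OF i(1) lenR _ x(3)]) (use x i in simp)
    from survival_keeps[OF NR Nn lenR n0 this] obtain z where "z \<in> set P'" "lotz z = (j, n - j)"
      using i x unfolding P'_def by auto
    thus "j \<in> covset n P'" using x(3) by (auto simp: covset_def)
  qed
qed

lemma maxLO_app: "P \<noteq> [] \<Longrightarrow> maxLO P \<le> maxLO (P @ Q)"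
  unfolding maxLO_def by (intro Max_mono) auto

lemma covset_app: "covset n P \<subseteq> covset n (P @ Q)"
  unfolding covset_def by auto

lemma Phi_mono:
  assumes gP: "good n N P" and Q: "\<forall>q\<in>set Q. length q = n" and Nn: "2 * (n + 1) \<le> N" and n0: "0 < n"
  shows "Phi n P \<le> Phi n (survival lotz prio N (P @ Q))"
proof -
  have Pne: "P \<noteq> []" using gP Nn by (auto simp: good_def)
  note sp = survival_props[OF gP Q Nn n0, of prio]
  have "maxLO P \<le> maxLO (survival lotz prio N (P @ Q))" using maxLO_app[OF Pne, of Q] sp(2) by simp
  moreover have "card (covset n P) \<le> card (covset n (survival lotz prio N (P @ Q)))"
    using covset_app[of n P Q] sp(3) by (intro card_mono covset_fin) auto
  ultimately show ?thesis unfolding Phi_def by simp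
qed

lemma keys_le_n:
  assumes "good n N P"
  shows "\<forall>y\<in>front lotz P 0. fst (lotz (P!y)) \<le> n \<and> snd (lotz (P!y)) \<le> n"
proof
  fix y assume "y \<in> front lotz P 0"
  hence "P!y \<in> set P" using front0_sub by fastforce
  thus "fst (lotz (P!y)) \<le> n \<and> snd (lotz (P!y)) \<le> n"
    using assms LO_le TZ_le by (auto simp: lotz_def good_def)
qed

lemma tournament_all:
  assumes i: "i < length P" and nb: "\<forall>b<length P. \<not> crowded_better f prio P b i"
  shows "1 / (2 * real (length P)) \<le> pmf (tournament f prio P) (P ! i)"
proof -
  have "{b. b < length P \<and> \<not> crowded_better f prio P b i} = {..<length P}" using nb by auto
  hence "real (card {b. b < length P \<and> \<not> crowded_better f prio P b i}) / (2 * real (length P) ^ 2)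
      = 1 / (2 * real (length P))" using i by (simp add: power2_eq_square)
  thus ?thesis using tournament_ge[OF i, of f prio] by simp
qed

lemma phase1:
  fixes prio :: "bool list list \<Rightarrow> nat \<Rightarrow> nat"
  assumes gP: "good n N P" and Nn: "2 * (n + 1) \<le> N" and n0: "0 < n" and m: "maxLO P < n"
  shows "\<exists>x k. length x = n \<and> k < n \<and> 1 / (12 * real N) \<le> pmf (tournament lotz prio P) x \<and>
    (\<forall>Q. (\<forall>q\<in>set Q. length q = n) \<longrightarrow> x[k := \<not> x!k] \<in> set Q \<longrightarrow>
         Phi n P + 1 \<le> Phi n (survival lotz prio N (P @ Q)))"
proof -
  have lP: "length P = N" and lx: "\<forall>x\<in>set P. length x = n" using gP by (auto simp: good_def)
  have Pne: "P \<noteq> []" using lP Nn by auto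
  obtain i0 where i0: "i0 \<in> front lotz P 0" "LO (P!i0) = maxLO P"
    using maxLO_front[OF Pne] unfolding maxLO_def by blast
  have S0: "front lotz P 0 \<noteq> {}" using i0 by auto
  define i where "i = last (SF lotz prio fst P)"
  have ii: "crowding_dist lotz prio P i = \<infinity>" "i \<in> front lotz P 0"
    using cd_last_inf[OF S0, of prio] unfolding i_def by auto
  have il: "i < length P" using ii(2) front0_sub by fastforce
  define x where "x = P ! i"
  have xP: "x \<in> set P" using il by (simp add: x_def)
  have lxn: "length x = n" using lx xP by simp
  have LOx: "LO x = maxLO P"
  proof (rule antisym)
    show "LO x \<le> maxLO P" by (rule maxLO_ge[OF xP])
    let ?xs = "SF lotz prio fst P"
    have "i0 \<in> set ?xs" using i0(1) SF_set by metis
    then obtain q where q: "q < length ?xs" "?xs ! q = i0" by (meson in_set_conv_nth)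
    have ne: "?xs \<noteq> []" using q by auto
    have "fst (lotz (P ! (?xs ! q))) \<le> fst (lotz (P ! (?xs ! (length ?xs - 1))))"
      using sorted_before[OF SF_sorted[where f=lotz and prio=prio and g=fst and L=P], where p="length ?xs - 1" and q=q] q by simp
    thus "maxLO P \<le> LO x" using q i0 ne unfolding x_def i_def by (simp add: lotz_def last_conv_nth)
  qed
  define k where "k = LO x"
  have kn: "k < n" using m LOx k_def by simp
  have xk: "\<not> x ! k" unfolding k_def LO_def using nth_length_takeWhile[of id x] kn lxn LOx LO_def by (metis id_apply k_def)
  have sel: "1 / (12 * real N) \<le> pmf (tournament lotz prio P) x"
  proof -
    have "\<forall>b<length P. \<not> crowded_better lotz prio P b i"
      using ii rank0[OF ii(2)] by (simp add: crowded_better_def)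
    from tournament_all[OF il this] have "1 / (2 * real N) \<le> pmf (tournament lotz prio P) x"
      using lP by (simp add: x_def)
    moreover have "1 / (12 * real N) \<le> 1 / (2 * real N)" using Nn by (simp add: frac_le)
    ultimately show ?thesis by linarith
  qed
  have prog: "Phi n P + 1 \<le> Phi n (survival lotz prio N (P @ Q))"
    if Q: "\<forall>q\<in>set Q. length q = n" and yQ: "x[k := \<not> x!k] \<in> set Q" for Q
  proof -
    let ?y = "x[k := \<not> x!k]"
    have y: "?y = x[LO x := True]" using xk k_def by simp
    have "Suc (LO x) \<le> LO ?y" unfolding y by (rule LO_upd) (use kn lxn k_def in simp)
    also have "\<dots> \<le> maxLO (P @ Q)" using yQ by (intro maxLO_ge) simp
    also have "\<dots> \<le> maxLO (survival lotz prio N (P @ Q))"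
      using survival_props(2)[OF gP Q Nn n0] by simp
    finally have a: "maxLO P + 1 \<le> maxLO (survival lotz prio N (P @ Q))" using LOx by simp
    have "card (covset n P) \<le> card (covset n (survival lotz prio N (P @ Q)))"
      using covset_app[of n P Q] survival_props(3)[OF gP Q Nn n0, of prio] by (intro card_mono covset_fin) auto
    thus ?thesis using a unfolding Phi_def by simp
  qed
  show ?thesis using lxn kn sel prog by blast
qed

lemma phase2:
  fixes prio :: "bool list list \<Rightarrow> nat \<Rightarrow> nat"
  assumes gP: "good n N P" and Nn: "2 * (n + 1) \<le> N" and n7: "7 \<le> n" and m: "maxLO P = n"
    and nc: "\<not> covers_front n P"
  shows "\<exists>x k. length x = n \<and> k < n \<and> 1 / (12 * real N) \<le> pmf (tournament lotz prio P) x \<and>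
    (\<forall>Q. (\<forall>q\<in>set Q. length q = n) \<longrightarrow> x[k := \<not> x!k] \<in> set Q \<longrightarrow>
         Phi n P + 1 \<le> Phi n (survival lotz prio N (P @ Q)))"
proof -
  have n0: "0 < n" using n7 by simp
  have lP: "length P = N" and lx: "\<forall>x\<in>set P. length x = n" using gP by (auto simp: good_def)
  have Pne: "P \<noteq> []" using lP Nn by auto
  have "maxLO P \<in> LO ` set P" unfolding maxLO_def using Pne by (intro Max_in) auto
  then obtain x0 where x0: "x0 \<in> set P" "LO x0 = n" using m by auto
  have "TZ x0 = 0" using LO_TZ_le[of x0] x0 lx by simp
  hence nC: "n \<in> covset n P" using x0 by (auto simp: covset_def lotz_def)
  define U where "U = {j. j \<le> n \<and> j \<notin> covset n P}"
  have Une: "U \<noteq> {}" using nc covset_sub[of n P] unfolding covers_iff U_def by auto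
  have Uf: "finite U" unfolding U_def by simp
  define u where "u = Max U"
  have uU: "u \<in> U" unfolding u_def by (rule Max_in[OF Uf Une])
  have un: "u < n" using uU nC by (auto simp: U_def) (metis le_neq_implies_less)
  define j where "j = Suc u"
  have jn: "j \<le> n" using un j_def by simp
  have jC: "j \<in> covset n P"
  proof (rule ccontr)
    assume "j \<notin> covset n P"
    hence "j \<in> U" using jn by (simp add: U_def)
    hence "j \<le> u" unfolding u_def by (rule Max_ge[OF Uf])
    thus False using j_def by simp
  qed
  have uC: "u \<notin> covset n P" using uU by (simp add: U_def)
  obtain x1 where x1: "x1 \<in> set P" "lotz x1 = (j, n - j)" using jC by (auto simp: covset_def)
  obtain i1 where i1: "i1 < length P" "P ! i1 = x1" using x1 by (meson in_set_conv_nth)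
  have i1F: "i1 \<in> front lotz P 0" by (rule pareto_front[OF i1(1) lx _ jn]) (use x1 i1 in simp)
  define i where "i = hd (blk lotz prio P (lotz (P ! i1)))"
  have ii: "i \<in> front lotz P 0" "lotz (P ! i) = (j, n - j)" "hd (blk lotz prio P (lotz (P ! i))) = i"
    using hd_blk[OF i1F, of prio] x1 i1 unfolding i_def by auto
  have il: "i < length P" using ii(1) front0_sub by fastforce
  define x where "x = P ! i"
  have xP: "x \<in> set P" using il by (simp add: x_def)
  have lxn: "length x = n" using lx xP by simp
  have xshape: "x = replicate j True @ replicate (n - j) False"
    by (rule pareto_shape[OF lxn _ jn]) (use ii(2) x_def in simp)
  have keys: "\<forall>y\<in>front lotz P 0. fst (lotz (P!y)) \<le> n \<and> snd (lotz (P!y)) \<le> n"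
    by (rule keys_le_n[OF gP])
  have gap: "\<forall>y\<in>front lotz P 0. fst (lotz (P!y)) < fst (lotz (P!i)) \<longrightarrow> fst (lotz (P!y)) + 2 \<le> fst (lotz (P!i))"
  proof (intro ballI impI)
    fix y assume yF: "y \<in> front lotz P 0" and lt: "fst (lotz (P!y)) < fst (lotz (P!i))"
    show "fst (lotz (P!y)) + 2 \<le> fst (lotz (P!i))"
    proof (rule ccontr)
      assume "\<not> ?thesis"
      hence fy: "fst (lotz (P!y)) = u" using lt ii(2) j_def by simp
      have "snd (lotz (P!i)) < snd (lotz (P!y))" by (rule nd_lt[OF ii(1) yF lt])
      hence s1: "n - j < snd (lotz (P!y))" using ii(2) by simp
      have yl: "y < length P" using yF front0_sub by fastforce
      have "length (P!y) = n" using lx yl by simp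
      hence "fst (lotz (P!y)) + snd (lotz (P!y)) \<le> n" using lotz_le[of "P!y"] by simp
      hence "lotz (P!y) = (u, n - u)" using fy s1 j_def jn by (cases "lotz (P!y)") auto
      hence "u \<in> covset n P" using yl un by (auto simp: covset_def)
      thus False using uC by simp
    qed
  qed
  have cdb: "ereal (real 2 / real n) + ereal (real 1 / real n) \<le> crowding_dist lotz prio P i"
    by (rule cd_hd_bound[OF ii(1) ii(3) _ gap _ gap1 keys]) auto
  have cd3: "ereal (3 / real n) \<le> crowding_dist lotz prio P i"
  proof -
    have "ereal (real 2 / real n) + ereal (real 1 / real n) = ereal (3 / real n)" by (simp add: add_divide_distrib[symmetric])
    thus ?thesis using cdb by simp
  qed
  have sub: "{b. b < length P \<and> crowded_better lotz prio P b i}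
            \<subseteq> {b \<in> front lotz P 0. ereal (3 / real n) < crowding_dist lotz prio P b}"
  proof
    fix b assume "b \<in> {b. b < length P \<and> crowded_better lotz prio P b i}"
    hence bl: "b < length P" and cb: "crowded_better lotz prio P b i" by auto
    have rb: "rank lotz P b = 0" and gt: "crowding_dist lotz prio P i < crowding_dist lotz prio P b"
      using cb rank0[OF ii(1)] by (auto simp: crowded_better_def)
    have gt3: "ereal (3 / real n) < crowding_dist lotz prio P b" using cd3 gt by order
    have "b \<in> front lotz P 0"
    proof (rule ccontr)
      assume "b \<notin> front lotz P 0"
      hence "crowding_dist lotz prio P b = 0" using cd_not_front0 rb by blast
      thus False using gt3 n0 by simp
    qed
    thus "b \<in> {b \<in> front lotz P 0. ereal (3 / real n) < crowding_dist lotz prio P b}" using gt3 by simp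
  qed
  have cnt: "real (card {b. b < length P \<and> crowded_better lotz prio P b i}) \<le> 4 + 4 / (3 / real n)"
  proof -
    have "card {b. b < length P \<and> crowded_better lotz prio P b i}
          \<le> card {b \<in> front lotz P 0. ereal (3 / real n) < crowding_dist lotz prio P b}"
      by (rule card_mono[OF _ sub]) (simp add: finite_front0)
    moreover have "real (card {b \<in> front lotz P 0. ereal (3 / real n) < crowding_dist lotz prio P b}) \<le> 4 + 4 / (3 / real n)"
      by (rule cd_count) (use n0 in simp)
    ultimately show ?thesis by linarith
  qed
  define Ag where "Ag = {b. b < length P \<and> \<not> crowded_better lotz prio P b i}"
  define Bd where "Bd = {b. b < length P \<and> crowded_better lotz prio P b i}"
  have split: "card Ag + card Bd = N"
  proof -
    have u: "Ag \<union> Bd = {..<length P}" by (auto simp: Ag_def Bd_def)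
    have d: "Ag \<inter> Bd = {}" by (auto simp: Ag_def Bd_def)
    have f: "finite Ag" "finite Bd" by (auto simp: Ag_def Bd_def)
    have "card (Ag \<union> Bd) = card Ag + card Bd" by (rule card_Un_disjoint[OF f d])
    thus ?thesis using u lP by simp
  qed
  have good_cnt: "real N / 6 \<le> real (card {b. b < length P \<and> \<not> crowded_better lotz prio P b i})"
  proof -
    have "4 / (3 / real n) = 4 * real n / 3" using n0 by simp
    hence cB: "real (card Bd) \<le> 4 + 4 * real n / 3" using cnt by (simp add: Bd_def)
    have "real (card Ag + card Bd) = real N" using split by simp
    hence e: "real (card Ag) + real (card Bd) = real N" by simp
    have "real (2 * (n + 1)) \<le> real N" using Nn by (simp only: of_nat_le_iff)
    hence N2: "2 * real n + 2 \<le> real N" by simp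
    have n7': "7 \<le> real n" using n7 by simp
    have "real N / 6 \<le> real (card Ag)" using cB e N2 n7' by linarith
    thus ?thesis by (simp add: Ag_def)
  qed
  have sel: "1 / (12 * real N) \<le> pmf (tournament lotz prio P) x"
  proof -
    have N0: "0 < real N" using Nn by simp
    have "1 / (12 * real N) = (real N / 6) / (2 * real N ^ 2)" using N0 by (simp add: power2_eq_square field_simps)
    also have "\<dots> \<le> real (card {b. b < length P \<and> \<not> crowded_better lotz prio P b i}) / (2 * real N ^ 2)"
      using good_cnt N0 by (intro divide_right_mono) auto
    also have "\<dots> \<le> pmf (tournament lotz prio P) x"
      using tournament_ge[OF il, of lotz prio] lP by (simp add: x_def)
    finally show ?thesis .
  qed
  define k where "k = j - 1"
  have kn: "k < n" using jn j_def k_def by simp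
  have kj: "k < length (replicate j True)" using k_def j_def by simp
  have "x ! k = replicate j True ! k" unfolding xshape using kj by (rule nth_append_left)
  hence xk: "x ! k" using kj by simp
  have prog: "Phi n P + 1 \<le> Phi n (survival lotz prio N (P @ Q))"
    if Q: "\<forall>q\<in>set Q. length q = n" and yQ: "x[k := \<not> x!k] \<in> set Q" for Q
  proof -
    let ?y = "x[k := \<not> x!k]"
    have "?y = (replicate j True @ replicate (n - j) False)[j - 1 := False]"
      using xk xshape k_def by simp
    also have "\<dots> = replicate (j - 1) True @ replicate (n - (j - 1)) False"
      by (rule pareto_flip) (use j_def jn in auto)
    finally have "lotz ?y = (u, n - u)" using lotz_block j_def by simp
    hence "u \<in> covset n (P @ Q)" using yQ un by (auto simp: covset_def)
    hence uP': "u \<in> covset n (survival lotz prio N (P @ Q))"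
      using survival_props(3)[OF gP Q Nn n0, of prio] by auto
    have "covset n P \<subset> covset n (survival lotz prio N (P @ Q))"
      using covset_app[of n P Q] survival_props(3)[OF gP Q Nn n0, of prio] uP' uC by auto
    hence "card (covset n P) < card (covset n (survival lotz prio N (P @ Q)))"
      by (intro psubset_card_mono covset_fin)
    moreover have "maxLO P \<le> maxLO (survival lotz prio N (P @ Q))"
      using maxLO_app[OF Pne, of Q] survival_props(2)[OF gP Q Nn n0, of prio] by simp
    ultimately show ?thesis unfolding Phi_def by simp
  qed
  show ?thesis using lxn kn sel prog by blast
qed

lemma step_eq:
  assumes "even N"
  shows "nsga2_step n N prio P = map_pmf (\<lambda>Q. survival lotz prio N (P @ Q)) (Gk n (tournament lotz prio P) (N div 2))"
proof -
  have "2 * (N div 2) = N" using assms by simp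
  thus ?thesis unfolding nsga2_step_def Gk_def by (simp add: map_bind_pmf)
qed

lemma Gk_support:
  assumes "Q \<in> set_pmf (Gk n T K)" "\<forall>x\<in>set_pmf T. length x = n"
  shows "\<forall>q\<in>set Q. length q = n"
proof -
  obtain S where S: "S \<in> set_pmf (seq_pmf (replicate (2 * K) T))" "Q \<in> set_pmf (variation n S)"
    using assms(1) unfolding Gk_def by auto
  have "\<forall>x\<in>set S. length x = n" using seq_rep_support[OF S(1)] assms(2) by auto
  thus ?thesis by (rule variation_support[OF S(2)])
qed

lemma step_support:
  assumes gP: "good n N P" and ev: "even N" and Nn: "2 * (n + 1) \<le> N" and n0: "0 < n"
    and P': "P' \<in> set_pmf (nsga2_step n N prio P)"
  shows "good n N P' \<and> Phi n P \<le> Phi n P'"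
proof -
  have Pne: "P \<noteq> []" using gP Nn by (auto simp: good_def)
  have T: "\<forall>x\<in>set_pmf (tournament lotz prio P). length x = n"
    using tournament_support[OF Pne, of lotz prio] gP by (auto simp: good_def)
  obtain Q where Q: "Q \<in> set_pmf (Gk n (tournament lotz prio P) (N div 2))" "P' = survival lotz prio N (P @ Q)"
    using P' unfolding step_eq[OF ev] by auto
  have lQ: "\<forall>q\<in>set Q. length q = n" by (rule Gk_support[OF Q(1) T])
  show ?thesis using survival_props(1)[OF gP lQ Nn n0, of prio] Phi_mono[OF gP lQ Nn n0, of prio] Q(2) by simp
qed

lemma bern:
  fixes r :: real
  assumes r: "0 \<le> r" "r \<le> 1" and K: "real K * r \<le> 1"
  shows "real K * r / 2 \<le> 1 - (1 - r) ^ K"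
proof -
  have b: "1 + real K * r \<le> (1 + r) ^ K" by (rule Bernoulli_inequality) (use r in simp)
  have "(1 - r) ^ K * (1 + r) ^ K = (1 - r * r) ^ K" by (simp add: power_mult_distrib[symmetric] algebra_simps)
  also have "\<dots> \<le> 1" using r by (intro power_le_one) (auto simp: mult_le_one)
  finally have p: "(1 - r) ^ K * (1 + r) ^ K \<le> 1" .
  have pos: "0 < 1 + real K * r" using r by (simp add: add_pos_nonneg)
  have q0: "0 \<le> (1 - r) ^ K" using r by simp
  have "(1 - r) ^ K * (1 + real K * r) \<le> (1 - r) ^ K * (1 + r) ^ K"
    using b q0 by (rule mult_left_mono)
  hence "(1 - r) ^ K * (1 + real K * r) \<le> 1" using p by linarith
  hence "(1 - r) ^ K \<le> 1 / (1 + real K * r)" using pos by (simp add: le_divide_eq)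
  moreover have "real K * r / 2 \<le> 1 - 1 / (1 + real K * r)"
  proof -
    have "1 - 1 / (1 + real K * r) = real K * r / (1 + real K * r)" using pos by (simp add: field_simps)
    moreover have "real K * r / 2 \<le> real K * r / (1 + real K * r)"
      using K pos r by (intro divide_left_mono) auto
    ultimately show ?thesis by simp
  qed
  ultimately show ?thesis by linarith
qed

lemma step_progress:
  assumes gP: "good n N P" and ev: "even N" and Nn: "2 * (n + 1) \<le> N" and n7: "7 \<le> n"
    and nc: "\<not> covers_front n P"
  shows "1 / (1440 * real n) \<le> measure_pmf.prob (nsga2_step n N prio P) {P'. Phi n P + 1 \<le> Phi n P'}"
proof -
  have n0: "0 < n" using n7 by simp
  have N0: "0 < N" using Nn by simp
  define T where "T = tournament lotz prio P"
  have Pne: "P \<noteq> []" using gP Nn by (auto simp: good_def)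
  have Tl: "\<forall>x\<in>set_pmf T. length x = n"
    using tournament_support[OF Pne, of lotz prio] gP unfolding T_def by (auto simp: good_def)
  obtain x k where xk: "length x = n" "k < n" "1 / (12 * real N) \<le> pmf T x"
    "\<And>Q. (\<forall>q\<in>set Q. length q = n) \<Longrightarrow> x[k := \<not> x!k] \<in> set Q \<Longrightarrow>
         Phi n P + 1 \<le> Phi n (survival lotz prio N (P @ Q))"
  proof -
    have "maxLO P \<le> n" using maxLO_le[OF gP N0] .
    hence "maxLO P < n \<or> maxLO P = n" by linarith
    thus ?thesis
    proof
      assume "maxLO P < n"
      from phase1[OF gP Nn n0 this, of prio] that show ?thesis unfolding T_def by blast
    next
      assume "maxLO P = n"
      from phase2[OF gP Nn n7 this nc, of prio] that show ?thesis unfolding T_def by blast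
    qed
  qed
  define y where "y = x[k := \<not> x!k]"
  define r0 where "r0 = 1 / (12 * real N) * (1 / 10) * (1 / (3 * real n))"
  have r0p: "0 \<le> r0" unfolding r0_def by simp
  have r0W: "r0 \<le> pmf (Wp n T) y"
  proof -
    have "r0 \<le> pmf T x * (1 / 10) * (1 / (3 * real n))"
      unfolding r0_def using xk(3) by (intro mult_right_mono) auto
    also have "\<dots> \<le> pmf (Wp n T) y" unfolding y_def by (rule Wp_ge[OF xk(1,2)])
    finally show ?thesis .
  qed
  define K where "K = N div 2"
  have Kr: "real K = real N / 2" using ev unfolding K_def by (auto elim!: evenE)
  have Kr0: "real K * r0 = 1 / (720 * real n)" using N0 unfolding Kr r0_def by (simp add: field_simps)
  have r01: "r0 \<le> 1"
  proof -
    have a: "1 \<le> real N" "1 \<le> real n * 360" using N0 n0 by auto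
    have "1 \<le> real N * (real n * 360)" using mult_mono[OF a] by simp
    thus ?thesis unfolding r0_def using N0 n0 by (simp add: field_simps)
  qed
  have s1: "1 / (1440 * real n) \<le> 1 - (1 - r0) ^ K"
  proof -
    have "real K * r0 \<le> 1" unfolding Kr0 using n0 by (simp add: field_simps)
    from bern[OF r0p r01 this] show ?thesis unfolding Kr0 by simp
  qed
  also have "\<dots> \<le> measure_pmf.prob (Gk n T K) {Q. y \<in> set Q}" by (rule Gk_success[OF r0W r0p])
  also have "\<dots> = measure_pmf.prob (Gk n T K) ({Q. y \<in> set Q} \<inter> set_pmf (Gk n T K))"
    by (simp add: measure_Int_set_pmf)
  also have "\<dots> \<le> measure_pmf.prob (Gk n T K) ((\<lambda>Q. survival lotz prio N (P @ Q)) -` {P'. Phi n P + 1 \<le> Phi n P'})"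
  proof (rule measure_pmf.finite_measure_mono)
    show "{Q. y \<in> set Q} \<inter> set_pmf (Gk n T K) \<subseteq> (\<lambda>Q. survival lotz prio N (P @ Q)) -` {P'. Phi n P + 1 \<le> Phi n P'}"
    proof
      fix Q assume Q: "Q \<in> {Q. y \<in> set Q} \<inter> set_pmf (Gk n T K)"
      have "\<forall>q\<in>set Q. length q = n" using Gk_support[OF _ Tl] Q by blast
      thus "Q \<in> (\<lambda>Q. survival lotz prio N (P @ Q)) -` {P'. Phi n P + 1 \<le> Phi n P'}"
        using xk(4) Q unfolding y_def by auto
    qed
  qed simp
  also have "\<dots> = measure_pmf.prob (nsga2_step n N prio P) {P'. Phi n P + 1 \<le> Phi n P'}"
    unfolding step_eq[OF ev] T_def K_def by (simp add: measure_map_pmf)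
  finally show ?thesis .
qed

definition nxt :: "nat \<Rightarrow> nat \<Rightarrow> (bool list list \<Rightarrow> nat \<Rightarrow> nat) \<Rightarrow> bool list list \<times> bool \<Rightarrow> (bool list list \<times> bool) pmf" where
  "nxt n N prio = (\<lambda>(P, h). map_pmf (\<lambda>P'. (P', h \<or> covers_front n P')) (nsga2_step n N prio P))"

lemma hist_Suc: "nsga2_hist n N prio (Suc t) = bind_pmf (nsga2_hist n N prio t) (nxt n N prio)"
  by (simp add: nxt_def)

definition gpot :: "nat \<Rightarrow> real \<Rightarrow> bool list list \<times> bool \<Rightarrow> ennreal" where
  "gpot n A s = (if snd s then 0 else ennreal (A * real (2 * n + 1 - Phi n (fst s))))"

lemma init_support:
  assumes "P \<in> set_pmf (init_pop n N)"
  shows "good n N P"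
proof -
  have a: "length P = N \<and> set P \<subseteq> set_pmf (uniform_string n)"
    using seq_rep_support[of P N "uniform_string n"] assms by (simp add: init_pop_def)
  have "length x = n" if "x \<in> set_pmf (uniform_string n)" for x
    using seq_support[of x "replicate n (bernoulli_pmf (1/2))"] that by (simp add: uniform_string_def)
  thus ?thesis using a by (auto simp: good_def)
qed

lemma hist_inv:
  assumes ev: "even N" and Nn: "2 * (n + 1) \<le> N" and n0: "0 < n"
  shows "s \<in> set_pmf (nsga2_hist n N prio t) \<Longrightarrow> good n N (fst s) \<and> (covers_front n (fst s) \<longrightarrow> snd s)"
proof (induction t arbitrary: s)
  case 0
  then show ?case using init_support by auto
next
  case (Suc t)
  then obtain P h P' where s: "(P, h) \<in> set_pmf (nsga2_hist n N prio t)" "P' \<in> set_pmf (nsga2_step n N prio P)"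
    "s = (P', h \<or> covers_front n P')"
    by (auto simp: hist_Suc nxt_def)
  have "good n N P" using Suc.IH[OF s(1)] by simp
  hence "good n N P'" using step_support[OF _ ev Nn n0 s(2)] by simp
  thus ?case using s(3) by simp
qed

lemma drift_point:
  assumes ev: "even N" and Nn: "2 * (n + 1) \<le> N" and n7: "7 \<le> n"
    and inv: "good n N (fst s) \<and> (covers_front n (fst s) \<longrightarrow> snd s)"
  defines "A \<equiv> 1440 * real n"
  shows "(\<integral>\<^sup>+ s'. gpot n A s' \<partial>measure_pmf (nxt n N prio s)) + indicator {s. \<not> snd s} s \<le> gpot n A s"
proof (cases "snd s")
  case True
  obtain P h where s: "s = (P, h)" by fastforce
  have "gpot n A s' = 0" if "s' \<in> set_pmf (nxt n N prio s)" for s'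
    using that True s by (auto simp: nxt_def gpot_def)
  hence "(\<integral>\<^sup>+ s'. gpot n A s' \<partial>measure_pmf (nxt n N prio s)) = \<integral>\<^sup>+ s'. 0 \<partial>measure_pmf (nxt n N prio s)"
    by (intro nn_integral_cong_AE) (auto simp: AE_measure_pmf_iff)
  then show ?thesis using True by (simp add: gpot_def)
next
  case False
  obtain P where s: "s = (P, False)" using False by (metis prod.collapse)
  have n0: "0 < n" using n7 by simp
  have N0: "0 < N" using Nn by simp
  have gP: "good n N P" and nc: "\<not> covers_front n P" using inv s by auto
  have A0: "0 < A" unfolding A_def using n0 by simp
  define St where "St = nsga2_step n N prio P"
  define D where "D P' = real (2 * n + 1 - Phi n P')" for P'
  define E where "E = {P'. Phi n P + 1 \<le> Phi n P'}"
  have PhiP: "Phi n P \<le> 2 * n + 1" by (rule Phi_le[OF gP N0])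
  have pw: "ennreal (A * D P') + ennreal A * indicator E P' \<le> ennreal (A * D P)" if P': "P' \<in> set_pmf St" for P'
  proof -
    have sp: "good n N P' \<and> Phi n P \<le> Phi n P'" using step_support[OF gP ev Nn n0] P' unfolding St_def by blast
    have PhiP': "Phi n P' \<le> 2 * n + 1" by (rule Phi_le) (use sp N0 in auto)
    have h: "D P' + indicator E P' \<le> D P"
      using sp PhiP PhiP' unfolding D_def E_def by (auto split: split_indicator)
    have "A * (D P' + indicator E P') \<le> A * D P" using h A0 by (intro mult_left_mono) auto
    hence "A * D P' + A * indicator E P' \<le> A * D P" by (simp add: distrib_left)
    moreover have "ennreal (A * D P') + ennreal A * indicator E P' = ennreal (A * D P' + A * indicator E P')"
    proof (cases "P' \<in> E")
      case True
      have "0 \<le> A * D P'" using A0 unfolding D_def by simp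
      thus ?thesis using True A0 by (simp add: ennreal_plus)
    next
      case False
      then show ?thesis by simp
    qed
    ultimately show ?thesis by (simp add: ennreal_leI)
  qed
  have "(\<integral>\<^sup>+ P'. ennreal (A * D P') \<partial>measure_pmf St) + ennreal A * emeasure (measure_pmf St) E
      = \<integral>\<^sup>+ P'. ennreal (A * D P') + ennreal A * indicator E P' \<partial>measure_pmf St"
    by (simp add: nn_integral_add nn_integral_cmult_indicator)
  also have "\<dots> \<le> \<integral>\<^sup>+ P'. ennreal (A * D P) \<partial>measure_pmf St"
    by (intro nn_integral_mono_AE) (auto simp: AE_measure_pmf_iff pw)
  also have "\<dots> = ennreal (A * D P)" by (simp add: measure_pmf.emeasure_space_1)
  finally have I: "(\<integral>\<^sup>+ P'. ennreal (A * D P') \<partial>measure_pmf St) + ennreal A * emeasure (measure_pmf St) E \<le> ennreal (A * D P)" .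
  have pr: "1 / A \<le> measure_pmf.prob St E"
    unfolding A_def St_def E_def using step_progress[OF gP ev Nn n7 nc, of prio] by simp
  have one: "1 \<le> ennreal A * emeasure (measure_pmf St) E"
  proof -
    have "1 = ennreal (A * (1 / A))" using A0 by simp
    also have "\<dots> \<le> ennreal (A * measure_pmf.prob St E)" using pr A0 by (intro ennreal_leI mult_left_mono) auto
    also have "\<dots> = ennreal A * emeasure (measure_pmf St) E"
      using A0 by (simp add: ennreal_mult measure_pmf.emeasure_eq_measure)
    finally show ?thesis .
  qed
  have nx: "nxt n N prio s = map_pmf (\<lambda>P'. (P', covers_front n P')) St" unfolding s St_def nxt_def by simp
  have "(\<integral>\<^sup>+ s'. gpot n A s' \<partial>measure_pmf (nxt n N prio s)) = \<integral>\<^sup>+ P'. gpot n A (P', covers_front n P') \<partial>measure_pmf St"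
    unfolding nx by (simp add: nn_integral_map_pmf)
  also have "\<dots> \<le> \<integral>\<^sup>+ P'. ennreal (A * D P') \<partial>measure_pmf St"
    by (intro nn_integral_mono) (simp add: gpot_def D_def)
  finally have J: "(\<integral>\<^sup>+ s'. gpot n A s' \<partial>measure_pmf (nxt n N prio s)) \<le> \<integral>\<^sup>+ P'. ennreal (A * D P') \<partial>measure_pmf St" .
  have "(\<integral>\<^sup>+ s'. gpot n A s' \<partial>measure_pmf (nxt n N prio s)) + indicator {s. \<not> snd s} s
        \<le> (\<integral>\<^sup>+ P'. ennreal (A * D P') \<partial>measure_pmf St) + ennreal A * emeasure (measure_pmf St) E"
    using J one s by (intro add_mono) auto
  also have "\<dots> \<le> ennreal (A * D P)" by (rule I)
  also have "\<dots> = gpot n A s" unfolding s gpot_def D_def by simp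
  finally show ?thesis .
qed

lemma telescope_step:
  assumes ev: "even N" and Nn: "2 * (n + 1) \<le> N" and n7: "7 \<le> n"
  defines "A \<equiv> 1440 * real n"
  shows "(\<integral>\<^sup>+ s. gpot n A s \<partial>measure_pmf (nsga2_hist n N prio (Suc t)))
          + emeasure (measure_pmf (nsga2_hist n N prio t)) {s. \<not> snd s}
        \<le> \<integral>\<^sup>+ s. gpot n A s \<partial>measure_pmf (nsga2_hist n N prio t)"
proof -
  have n0: "0 < n" using n7 by simp
  have "(\<integral>\<^sup>+ s. gpot n A s \<partial>measure_pmf (nsga2_hist n N prio (Suc t)))
          + emeasure (measure_pmf (nsga2_hist n N prio t)) {s. \<not> snd s}
      = (\<integral>\<^sup>+ s. (\<integral>\<^sup>+ s'. gpot n A s' \<partial>measure_pmf (nxt n N prio s)) \<partial>measure_pmf (nsga2_hist n N prio t))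
          + (\<integral>\<^sup>+ s. indicator {s. \<not> snd s} s \<partial>measure_pmf (nsga2_hist n N prio t))"
    by (simp add: hist_Suc nn_integral_bind_pmf del: nsga2_hist.simps)
  also have "\<dots> = \<integral>\<^sup>+ s. (\<integral>\<^sup>+ s'. gpot n A s' \<partial>measure_pmf (nxt n N prio s)) + indicator {s. \<not> snd s} s
                    \<partial>measure_pmf (nsga2_hist n N prio t)"
    by (rule nn_integral_add[symmetric]) auto
  also have "\<dots> \<le> \<integral>\<^sup>+ s. gpot n A s \<partial>measure_pmf (nsga2_hist n N prio t)"
  proof (intro nn_integral_mono_AE)
    show "AE s in measure_pmf (nsga2_hist n N prio t).
            (\<integral>\<^sup>+ s'. gpot n A s' \<partial>measure_pmf (nxt n N prio s)) + indicator {s. \<not> snd s} s \<le> gpot n A s"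
      unfolding AE_measure_pmf_iff A_def
      using drift_point[OF ev Nn n7] hist_inv[OF ev Nn n0] by blast
  qed
  finally show ?thesis .
qed

lemma telescope_sum:
  assumes ev: "even N" and Nn: "2 * (n + 1) \<le> N" and n7: "7 \<le> n"
  defines "A \<equiv> 1440 * real n"
  shows "(\<integral>\<^sup>+ s. gpot n A s \<partial>measure_pmf (nsga2_hist n N prio T))
          + (\<Sum>t<T. emeasure (measure_pmf (nsga2_hist n N prio t)) {s. \<not> snd s})
        \<le> \<integral>\<^sup>+ s. gpot n A s \<partial>measure_pmf (nsga2_hist n N prio 0)"
proof (induction T)
  case 0
  then show ?case by simp
next
  case (Suc T)
  have "(\<integral>\<^sup>+ s. gpot n A s \<partial>measure_pmf (nsga2_hist n N prio (Suc T)))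
          + (\<Sum>t<Suc T. emeasure (measure_pmf (nsga2_hist n N prio t)) {s. \<not> snd s})
      = ((\<integral>\<^sup>+ s. gpot n A s \<partial>measure_pmf (nsga2_hist n N prio (Suc T)))
          + emeasure (measure_pmf (nsga2_hist n N prio T)) {s. \<not> snd s})
          + (\<Sum>t<T. emeasure (measure_pmf (nsga2_hist n N prio t)) {s. \<not> snd s})"
    by (simp add: ac_simps del: nsga2_hist.simps)
  also have "\<dots> \<le> (\<integral>\<^sup>+ s. gpot n A s \<partial>measure_pmf (nsga2_hist n N prio T))
          + (\<Sum>t<T. emeasure (measure_pmf (nsga2_hist n N prio t)) {s. \<not> snd s})"
    unfolding A_def by (intro add_right_mono telescope_step[OF ev Nn n7])
  also have "\<dots> \<le> \<integral>\<^sup>+ s. gpot n A s \<partial>measure_pmf (nsga2_hist n N prio 0)" by (rule Suc.IH)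
  finally show ?case .
qed

lemma expected_bound:
  assumes ev: "even N" and Nn: "2 * (n + 1) \<le> N" and n7: "7 \<le> n"
  shows "expected_generations n N prio \<le> ennreal (1440 * real n * real (2 * n + 1))"
proof -
  define A where "A = 1440 * real n"
  have A0: "0 \<le> A" unfolding A_def by simp
  have g: "gpot n A s \<le> ennreal (A * real (2 * n + 1))" for s
    unfolding gpot_def using A0 by (auto intro!: ennreal_leI mult_left_mono)
  have u0: "(\<integral>\<^sup>+ s. gpot n A s \<partial>measure_pmf (nsga2_hist n N prio 0)) \<le> ennreal (A * real (2 * n + 1))"
  proof -
    have "(\<integral>\<^sup>+ s. gpot n A s \<partial>measure_pmf (nsga2_hist n N prio 0)) \<le> \<integral>\<^sup>+ s. ennreal (A * real (2 * n + 1)) \<partial>measure_pmf (nsga2_hist n N prio 0)"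
      by (intro nn_integral_mono g)
    also have "\<dots> = ennreal (A * real (2 * n + 1))" by (simp add: measure_pmf.emeasure_space_1)
    finally show ?thesis .
  qed
  have ps: "(\<Sum>t<T. ennreal (measure_pmf.prob (nsga2_hist n N prio t) {s. \<not> snd s})) \<le> ennreal (A * real (2 * n + 1))" for T
  proof -
    have "(\<Sum>t<T. ennreal (measure_pmf.prob (nsga2_hist n N prio t) {s. \<not> snd s}))
        = (\<Sum>t<T. emeasure (measure_pmf (nsga2_hist n N prio t)) {s. \<not> snd s})"
      by (simp add: measure_pmf.emeasure_eq_measure del: nsga2_hist.simps)
    also have "\<dots> \<le> (\<integral>\<^sup>+ s. gpot n A s \<partial>measure_pmf (nsga2_hist n N prio T))
          + (\<Sum>t<T. emeasure (measure_pmf (nsga2_hist n N prio t)) {s. \<not> snd s})"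
      by (rule add_increasing) auto
    also have "\<dots> \<le> \<integral>\<^sup>+ s. gpot n A s \<partial>measure_pmf (nsga2_hist n N prio 0)"
      unfolding A_def by (rule telescope_sum[OF ev Nn n7])
    also have "\<dots> \<le> ennreal (A * real (2 * n + 1))" by (rule u0)
    finally show ?thesis .
  qed
  have "expected_generations n N prio = (SUP T. \<Sum>t<T. ennreal (measure_pmf.prob (nsga2_hist n N prio t) {s. \<not> snd s}))"
    unfolding expected_generations_def by (rule suminf_eq_SUP)
  also have "\<dots> \<le> ennreal (A * real (2 * n + 1))" by (intro SUP_least ps)
  finally show ?thesis unfolding A_def .
qed

theorem theorem1:
  fixes c :: real
  shows "\<exists>C n0. \<forall>n N prio. n \<ge> n0 \<and> even N \<and> 2 * n + 2 \<le> N \<and> real N \<le> c * real n \<longrightarrow>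
            expected_generations n N prio \<le> ennreal (C * real n ^ 2)"
proof (intro exI allI impI)
  fix n N :: nat and prio :: "bool list list \<Rightarrow> nat \<Rightarrow> nat"
  assume a: "7 \<le> n \<and> even N \<and> 2 * n + 2 \<le> N \<and> real N \<le> c * real n"
  hence ev: "even N" and Nn: "2 * (n + 1) \<le> N" and n7: "7 \<le> n" by auto
  have "expected_generations n N prio \<le> ennreal (1440 * real n * real (2 * n + 1))"
    by (rule expected_bound[OF ev Nn n7])
  also have "\<dots> \<le> ennreal (4320 * real n ^ 2)"
  proof (rule ennreal_leI)
    have "1 \<le> real n" using n7 by simp
    hence "real (2 * n + 1) \<le> 3 * real n" by simp
    hence "1440 * real n * real (2 * n + 1) \<le> 1440 * real n * (3 * real n)"
      by (intro mult_left_mono) auto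
    thus "1440 * real n * real (2 * n + 1) \<le> 4320 * real n ^ 2" by (simp add: power2_eq_square)
  qed
  finally show "expected_generations n N prio \<le> ennreal (4320 * real n ^ 2)" .
qed

end
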